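(* Let $G$ be a reaction network with exactly two reactions and suppose $cap_{pos}(G)=2N+1$ with $0\le N<+\infty$. If for a rate-constant vector $\kappa^*$ and a total-constant vector $c^*$, $G$ has $2N+1$ positive steady states in $\mathcal P_{c^*}$ and $N+1$ of them are stable, then $(\gamma_{\tau1}-\gamma_{\tau2})(\beta_{\tau1}-\alpha_{\tau1})<0$, where $\tau$ and $\gamma_{\tau j}$ are computed from $c^*$. In particular, if $\tau$ is the only index in its class $[\tau]$, then $(\alpha_{\tau1}-\alpha_{\tau2})(\beta_{\tau1}-\alpha_{\tau1})<0$.
   Context: A reaction network $G$ has species $X_1,\dots,X_s$ and $m$ reactions $\sum_{i}\alpha_{ij}X_i\to\sum_i\beta_{ij}X_i$, $\alpha_{ij},\beta_{ij}\in\mathbb Z_{\ge0}$, $(\alpha_{1j},\dots,\alpha_{sj})\neq(\beta_{1j},\dots,\beta_{sj})$; here $m=2$. $\mathcal N$ has entries $\beta_{ij}-\alpha_{ij}$, $S=\mathrm{im}\,\mathcal N$. For $\kappa\in\mathbb R^m_{>0}$, $f(\kappa;x)=\mathcal N(\kappa_1\prod_i x_i^{\alpha_{i1}},\kappa_2\prod_i x_i^{\alpha_{i2}})^\top$. When $G$ has a positive steady state, $S$ is one-dimensional; species are then labelled so that $\beta_{11}-\alpha_{11}\ne0$, and for $c\in\mathbb R^{s-1}$, $\mathcal P_c=\{x\in\mathbb R^s_{\ge0}:(\beta_{i1}-\alpha_{i1})x_1-(\beta_{11}-\alpha_{11})x_i=c_{i-1},\ i=2,\dots,s\}$. A steady state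 is $x\ge0$ with $f(\kappa;x)=0$; positive if $x>0$; nondegenerate if $\mathrm{Jac}_f(x)(S)=S$; stable if nondegenerate and all nonzero eigenvalues of $\mathrm{Jac}_f(x)$ have negative real parts. $cap_{pos}(G)$ is the maximal $N\in\mathbb Z_{\ge0}\cup\{+\infty\}$ such that for some $\kappa$ and compatibility class, $G$ has $N$ positive steady states in it. Notation for $c^*$: $A_1=1,B_1=0$, $A_i=\frac{\beta_{i1}-\alpha_{i1}}{\beta_{11}-\alpha_{11}}$, $B_i=-\frac{c^*_{i-1}}{\beta_{11}-\alpha_{11}}$ ($i\ge2$). $[i]=\{k:A_k\ne0,B_k/A_k=B_i/A_i\}$ if $A_i\ne0$, $[i]=\{k:A_k=0\}$ otherwise; species labelled so that $1,\dots,r$ represent the $r$ distinct classes. $\varphi_k=\min_j\sum_{i\in[k]}\alpha_{ij}$, $\gamma_{kj}=\sum_{i\in[k]}\alpha_{ij}-\varphi_k$. $\mathcal J=\{i:A_i\ne0\}$, $\mathcal H=\{k\in\{1,\dots,r\}\cap\mathcal J:\gamma_{k1},\dots,\gamma_{km}\text{ not all equal}\}$. Standing assumption: if for some rate constants $G$ has $N$ positive steady states in $\mathcal P_{c^*}$ with $0<N<\infty$, species are labelled so that $1\in\mathcal H$. $I_i=(-B_i/A_i,+\infty)$ if $A_i>0$, $(0,+\infty)$ if $A_i=0$, $(0,-B_i/A_i)$ if $A_i<0$; $I=\bigcap_{k\in\mathcal H}I_k$; $\tau\in\mathcal H$ has $A_\tau>0$ with $-B_\tau/A_\tau$ the left endpoint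 of $I$. *)

theory Defs
  imports "HOL-Analysis.Analysis" "HOL-Library.Extended_Nat"
begin

text \<open>A reaction network with two reactions on species 1..s.
  alpha i j, beta i j (i in 1..s, j in 1..2) are the stoichiometric coefficients
  of species X_i in the reactant / product complex of reaction j.
  Rate constants kappa :: nat => real (only kappa 1, kappa 2 are used),
  concentration vectors x :: nat => real (entries x 1 .. x s; zero elsewhere),
  total constants c :: nat => real (entries c 1 .. c (s-1)).\<close>

definition two_reaction_network :: "nat \<Rightarrow> (nat \<Rightarrow> nat \<Rightarrow> nat) \<Rightarrow> (nat \<Rightarrow> nat \<Rightarrow> nat) \<Rightarrow> bool" where
  "two_reaction_network s \<alpha> \<beta> \<longleftrightarrow> s \<ge> 1 \<and>
     (\<forall>j\<in>{1,2}. \<exists>i\<in>{1..s}. \<alpha> i j \<noteq> \<beta> i j)"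

definition stoich :: "(nat \<Rightarrow> nat \<Rightarrow> nat) \<Rightarrow> (nat \<Rightarrow> nat \<Rightarrow> nat) \<Rightarrow> nat \<Rightarrow> nat \<Rightarrow> real" where
  "stoich \<alpha> \<beta> i j = real (\<beta> i j) - real (\<alpha> i j)"

definition rfield :: "nat \<Rightarrow> (nat \<Rightarrow> nat \<Rightarrow> nat) \<Rightarrow> (nat \<Rightarrow> nat \<Rightarrow> nat) \<Rightarrow> (nat \<Rightarrow> real)
    \<Rightarrow> (nat \<Rightarrow> real) \<Rightarrow> nat \<Rightarrow> real" where
  "rfield s \<alpha> \<beta> \<kappa> x i =
     (\<Sum>j\<in>{1,2}. stoich \<alpha> \<beta> i j * (\<kappa> j * (\<Prod>l\<in>{1..s}. x l ^ \<alpha> l j)))"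

definition jac :: "nat \<Rightarrow> (nat \<Rightarrow> nat \<Rightarrow> nat) \<Rightarrow> (nat \<Rightarrow> nat \<Rightarrow> nat) \<Rightarrow> (nat \<Rightarrow> real)
    \<Rightarrow> (nat \<Rightarrow> real) \<Rightarrow> nat \<Rightarrow> nat \<Rightarrow> real" where
  "jac s \<alpha> \<beta> \<kappa> x i k = deriv (\<lambda>t. rfield s \<alpha> \<beta> \<kappa> (x(k := t)) i) (x k)"

definition stoich_space :: "nat \<Rightarrow> (nat \<Rightarrow> nat \<Rightarrow> nat) \<Rightarrow> (nat \<Rightarrow> nat \<Rightarrow> nat) \<Rightarrow> (nat \<Rightarrow> real) set" where
  "stoich_space s \<alpha> \<beta> = {v. \<exists>a b. \<forall>i. v i =
      (if i \<in> {1..s} then a * stoich \<alpha> \<beta> i 1 + b * stoich \<alpha> \<beta> i 2 else 0)}"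

definition mat_app :: "nat \<Rightarrow> (nat \<Rightarrow> nat \<Rightarrow> real) \<Rightarrow> (nat \<Rightarrow> real) \<Rightarrow> (nat \<Rightarrow> real)" where
  "mat_app s M v = (\<lambda>i. if i \<in> {1..s} then (\<Sum>k\<in>{1..s}. M i k * v k) else 0)"

definition is_eigenvalue :: "nat \<Rightarrow> (nat \<Rightarrow> nat \<Rightarrow> real) \<Rightarrow> complex \<Rightarrow> bool" where
  "is_eigenvalue s M z \<longleftrightarrow> (\<exists>v :: nat \<Rightarrow> complex. (\<exists>i\<in>{1..s}. v i \<noteq> 0) \<and>
      (\<forall>i\<in>{1..s}. (\<Sum>k\<in>{1..s}. complex_of_real (M i k) * v k) = z * v i))"

text \<open>Stoichiometric compatibility class P_c (species labelled so that beta 1 1 \<noteq> alpha 1 1).\<close>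
definition compat_class :: "nat \<Rightarrow> (nat \<Rightarrow> nat \<Rightarrow> nat) \<Rightarrow> (nat \<Rightarrow> nat \<Rightarrow> nat) \<Rightarrow> (nat \<Rightarrow> real)
    \<Rightarrow> (nat \<Rightarrow> real) set" where
  "compat_class s \<alpha> \<beta> c = {x. (\<forall>i. i \<notin> {1..s} \<longrightarrow> x i = 0) \<and> (\<forall>i\<in>{1..s}. x i \<ge> 0) \<and>
      (\<forall>i\<in>{2..s}. stoich \<alpha> \<beta> i 1 * x 1 - stoich \<alpha> \<beta> 1 1 * x i = c (i - 1))}"

definition pos_steady_states :: "nat \<Rightarrow> (nat \<Rightarrow> nat \<Rightarrow> nat) \<Rightarrow> (nat \<Rightarrow> nat \<Rightarrow> nat) \<Rightarrow> (nat \<Rightarrow> real)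
    \<Rightarrow> (nat \<Rightarrow> real) \<Rightarrow> (nat \<Rightarrow> real) set" where
  "pos_steady_states s \<alpha> \<beta> \<kappa> c = {x \<in> compat_class s \<alpha> \<beta> c.
      (\<forall>i\<in>{1..s}. x i > 0) \<and> (\<forall>i\<in>{1..s}. rfield s \<alpha> \<beta> \<kappa> x i = 0)}"

definition nondegenerate :: "nat \<Rightarrow> (nat \<Rightarrow> nat \<Rightarrow> nat) \<Rightarrow> (nat \<Rightarrow> nat \<Rightarrow> nat) \<Rightarrow> (nat \<Rightarrow> real)
    \<Rightarrow> (nat \<Rightarrow> real) \<Rightarrow> bool" where
  "nondegenerate s \<alpha> \<beta> \<kappa> x \<longleftrightarrow>
     mat_app s (jac s \<alpha> \<beta> \<kappa> x) ` stoich_space s \<alpha> \<beta> = stoich_space s \<alpha> \<beta>"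

definition stable :: "nat \<Rightarrow> (nat \<Rightarrow> nat \<Rightarrow> nat) \<Rightarrow> (nat \<Rightarrow> nat \<Rightarrow> nat) \<Rightarrow> (nat \<Rightarrow> real)
    \<Rightarrow> (nat \<Rightarrow> real) \<Rightarrow> bool" where
  "stable s \<alpha> \<beta> \<kappa> x \<longleftrightarrow> nondegenerate s \<alpha> \<beta> \<kappa> x \<and>
     (\<forall>z. is_eigenvalue s (jac s \<alpha> \<beta> \<kappa> x) z \<and> z \<noteq> 0 \<longrightarrow> Re z < 0)"

definition ecard :: "'a set \<Rightarrow> enat" where
  "ecard A = (if finite A then enat (card A) else \<infinity>)"

definition cap_pos :: "nat \<Rightarrow> (nat \<Rightarrow> nat \<Rightarrow> nat) \<Rightarrow> (nat \<Rightarrow> nat \<Rightarrow> nat) \<Rightarrow> enat" where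
  "cap_pos s \<alpha> \<beta> = Sup {ecard (pos_steady_states s \<alpha> \<beta> \<kappa> c) | \<kappa> c. \<kappa> 1 > 0 \<and> \<kappa> 2 > 0}"

definition coefA :: "(nat \<Rightarrow> nat \<Rightarrow> nat) \<Rightarrow> (nat \<Rightarrow> nat \<Rightarrow> nat) \<Rightarrow> nat \<Rightarrow> real" where
  "coefA \<alpha> \<beta> i = (if i = 1 then 1 else stoich \<alpha> \<beta> i 1 / stoich \<alpha> \<beta> 1 1)"

definition coefB :: "(nat \<Rightarrow> nat \<Rightarrow> nat) \<Rightarrow> (nat \<Rightarrow> nat \<Rightarrow> nat) \<Rightarrow> (nat \<Rightarrow> real) \<Rightarrow> nat \<Rightarrow> real" where
  "coefB \<alpha> \<beta> c i = (if i = 1 then 0 else - c (i - 1) / stoich \<alpha> \<beta> 1 1)"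

definition sp_class :: "nat \<Rightarrow> (nat \<Rightarrow> nat \<Rightarrow> nat) \<Rightarrow> (nat \<Rightarrow> nat \<Rightarrow> nat) \<Rightarrow> (nat \<Rightarrow> real) \<Rightarrow> nat \<Rightarrow> nat set" where
  "sp_class s \<alpha> \<beta> c i =
     (if coefA \<alpha> \<beta> i \<noteq> 0 then
        {k\<in>{1..s}. coefA \<alpha> \<beta> k \<noteq> 0 \<and> coefB \<alpha> \<beta> c k / coefA \<alpha> \<beta> k = coefB \<alpha> \<beta> c i / coefA \<alpha> \<beta> i}
      else {k\<in>{1..s}. coefA \<alpha> \<beta> k = 0})"

definition phi :: "nat \<Rightarrow> (nat \<Rightarrow> nat \<Rightarrow> nat) \<Rightarrow> (nat \<Rightarrow> nat \<Rightarrow> nat) \<Rightarrow> (nat \<Rightarrow> real) \<Rightarrow> nat \<Rightarrow> nat" where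
  "phi s \<alpha> \<beta> c k = min (\<Sum>i\<in>sp_class s \<alpha> \<beta> c k. \<alpha> i 1) (\<Sum>i\<in>sp_class s \<alpha> \<beta> c k. \<alpha> i 2)"

definition gam :: "nat \<Rightarrow> (nat \<Rightarrow> nat \<Rightarrow> nat) \<Rightarrow> (nat \<Rightarrow> nat \<Rightarrow> nat) \<Rightarrow> (nat \<Rightarrow> real) \<Rightarrow> nat \<Rightarrow> nat \<Rightarrow> int" where
  "gam s \<alpha> \<beta> c k j = int (\<Sum>i\<in>sp_class s \<alpha> \<beta> c k. \<alpha> i j) - int (phi s \<alpha> \<beta> c k)"

definition Jset :: "nat \<Rightarrow> (nat \<Rightarrow> nat \<Rightarrow> nat) \<Rightarrow> (nat \<Rightarrow> nat \<Rightarrow> nat) \<Rightarrow> nat set" where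
  "Jset s \<alpha> \<beta> = {i\<in>{1..s}. coefA \<alpha> \<beta> i \<noteq> 0}"

definition Hset :: "nat \<Rightarrow> (nat \<Rightarrow> nat \<Rightarrow> nat) \<Rightarrow> (nat \<Rightarrow> nat \<Rightarrow> nat) \<Rightarrow> (nat \<Rightarrow> real) \<Rightarrow> nat \<Rightarrow> nat set" where
  "Hset s \<alpha> \<beta> c r = {k \<in> {1..r} \<inter> Jset s \<alpha> \<beta>. gam s \<alpha> \<beta> c k 1 \<noteq> gam s \<alpha> \<beta> c k 2}"

definition Ival :: "(nat \<Rightarrow> nat \<Rightarrow> nat) \<Rightarrow> (nat \<Rightarrow> nat \<Rightarrow> nat) \<Rightarrow> (nat \<Rightarrow> real) \<Rightarrow> nat \<Rightarrow> real set" where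
  "Ival \<alpha> \<beta> c i =
     (if coefA \<alpha> \<beta> i > 0 then {- coefB \<alpha> \<beta> c i / coefA \<alpha> \<beta> i <..}
      else if coefA \<alpha> \<beta> i = 0 then {0<..}
      else {0<..< - coefB \<alpha> \<beta> c i / coefA \<alpha> \<beta> i})"

definition Iset :: "nat \<Rightarrow> (nat \<Rightarrow> nat \<Rightarrow> nat) \<Rightarrow> (nat \<Rightarrow> nat \<Rightarrow> nat) \<Rightarrow> (nat \<Rightarrow> real) \<Rightarrow> nat \<Rightarrow> real set" where
  "Iset s \<alpha> \<beta> c r = (\<Inter>k\<in>Hset s \<alpha> \<beta> c r. Ival \<alpha> \<beta> c k)"

definition is_tau :: "nat \<Rightarrow> (nat \<Rightarrow> nat \<Rightarrow> nat) \<Rightarrow> (nat \<Rightarrow> nat \<Rightarrow> nat) \<Rightarrow> (nat \<Rightarrow> real) \<Rightarrow> nat \<Rightarrow> nat \<Rightarrow> bool" where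
  "is_tau s \<alpha> \<beta> c r \<tau> \<longleftrightarrow> \<tau> \<in> Hset s \<alpha> \<beta> c r \<and> coefA \<alpha> \<beta> \<tau> > 0 \<and>
     Iset s \<alpha> \<beta> c r \<noteq> {} \<and> - coefB \<alpha> \<beta> c \<tau> / coefA \<alpha> \<beta> \<tau> = Inf (Iset s \<alpha> \<beta> c r)"

text \<open>Labelling of species: 1..r are representatives of the r distinct classes.\<close>
definition class_reps :: "nat \<Rightarrow> (nat \<Rightarrow> nat \<Rightarrow> nat) \<Rightarrow> (nat \<Rightarrow> nat \<Rightarrow> nat) \<Rightarrow> (nat \<Rightarrow> real) \<Rightarrow> nat \<Rightarrow> bool" where
  "class_reps s \<alpha> \<beta> c r \<longleftrightarrow> r \<le> s \<and>
     (\<forall>k1\<in>{1..r}. \<forall>k2\<in>{1..r}. sp_class s \<alpha> \<beta> c k1 = sp_class s \<alpha> \<beta> c k2 \<longrightarrow> k1 = k2) \<and>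
     (\<forall>i\<in>{1..s}. \<exists>k\<in>{1..r}. i \<in> sp_class s \<alpha> \<beta> c k)"

end

theory Submission
  imports Defs
begin


definition down_cross :: "(real \<Rightarrow> real) \<Rightarrow> real \<Rightarrow> bool" where
  "down_cross f z \<longleftrightarrow> (\<exists>e>0. (\<forall>u. z - e < u \<and> u < z \<longrightarrow> f u > 0) \<and> (\<forall>u. z < u \<and> u < z + e \<longrightarrow> f u < 0))"
definition up_cross :: "(real \<Rightarrow> real) \<Rightarrow> real \<Rightarrow> bool" where
  "up_cross f z \<longleftrightarrow> (\<exists>e>0. (\<forall>u. z - e < u \<and> u < z \<longrightarrow> f u < 0) \<and> (\<forall>u. z < u \<and> u < z + e \<longrightarrow> f u > 0))"

lemma sign_const:
  fixes f :: "real \<Rightarrow> real"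
  assumes cont: "\<forall>x. isCont f x" and uv: "u \<le> v" and nz: "\<forall>x. u \<le> x \<and> x \<le> v \<longrightarrow> f x \<noteq> 0"
  shows "(f u > 0) = (f v > 0)"
proof
  assume "f u > 0"
  show "f v > 0"
  proof (rule ccontr)
    assume "\<not> f v > 0"
    then have "f v \<le> 0" by simp
    from IVT2[of f v 0 u, OF this] \<open>f u > 0\<close> uv cont obtain x where "u \<le> x" "x \<le> v" "f x = 0" by force
    with nz show False by auto
  qed
next
  assume "f v > 0"
  show "f u > 0"
  proof (rule ccontr)
    assume "\<not> f u > 0"
    then have "f u \<le> 0" by simp
    from IVT[of f u 0 v, OF this] \<open>f v > 0\<close> uv cont obtain x where "u \<le> x" "x \<le> v" "f x = 0" by force
    with nz show False by auto
  qed
qed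

lemma count_cross_aux:
  fixes f :: "real \<Rightarrow> real" and U :: "real set"
  assumes cont: "\<forall>x. isCont f x" and opn: "open U"
    and conv: "\<And>x y z. x \<in> U \<Longrightarrow> y \<in> U \<Longrightarrow> x \<le> z \<Longrightarrow> z \<le> y \<Longrightarrow> z \<in> U"
    and fin: "finite {z\<in>U. f z = 0}"
    and start: "\<And>p. p \<in> U \<Longrightarrow> (\<And>z. z \<in> U \<Longrightarrow> f z = 0 \<Longrightarrow> p < z) \<Longrightarrow> f p > 0"
  shows "\<And>q. q \<in> U \<Longrightarrow> f q \<noteq> 0 \<Longrightarrow> card {z\<in>U. f z = 0 \<and> z < q} = n \<Longrightarrow>
     int (card {z\<in>U. f z = 0 \<and> z < q \<and> down_cross f z}) - int (card {z\<in>U. f z = 0 \<and> z < q \<and> up_cross f z})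
       = (if f q < 0 then 1 else 0)"
proof (induction n)
  case 0
  fix q assume q: "q \<in> U" "f q \<noteq> 0" "card {z\<in>U. f z = 0 \<and> z < q} = 0"
  have fz: "finite {z\<in>U. f z = 0 \<and> z < q}" by (rule finite_subset[OF _ fin]) auto
  with q have e: "{z\<in>U. f z = 0 \<and> z < q} = {}" by simp
  have "f q > 0"
  proof (rule start[OF q(1)])
    fix z assume "z \<in> U" "f z = 0"
    with e q(2) show "q < z" by (cases "z < q") (auto, metis linorder_neqE_linordered_idom)
  qed
  moreover have e2: "{z\<in>U. f z = 0 \<and> z < q \<and> down_cross f z} = {}" "{z\<in>U. f z = 0 \<and> z < q \<and> up_cross f z} = {}"
    using e by auto
  ultimately show "int (card {z\<in>U. f z = 0 \<and> z < q \<and> down_cross f z}) - int (card {z\<in>U. f z = 0 \<and> z < q \<and> up_cross f z})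
       = (if f q < 0 then 1 else 0)" unfolding e2 by simp
next
  case (Suc n)
  fix q assume q: "q \<in> U" "f q \<noteq> 0" "card {z\<in>U. f z = 0 \<and> z < q} = Suc n"
  define Zq where "Zq = {z\<in>U. f z = 0 \<and> z < q}"
  have finZq: "finite Zq" unfolding Zq_def by (rule finite_subset[OF _ fin]) auto
  have neZq: "Zq \<noteq> {}" using q(3) unfolding Zq_def by (metis card.empty nat.distinct(1))
  define z0 where "z0 = Max Zq"
  have z0: "z0 \<in> Zq" "\<And>z. z \<in> Zq \<Longrightarrow> z \<le> z0" using finZq neZq z0_def by auto
  then have z0U: "z0 \<in> U" "f z0 = 0" "z0 < q" unfolding Zq_def by auto
  obtain q' where q': "q' \<in> U" "q' < z0" "\<And>z. z \<in> U \<Longrightarrow> f z = 0 \<Longrightarrow> z < z0 \<Longrightarrow> z < q'"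
  proof (cases "Zq - {z0} = {}")
    case True
    obtain e where e: "e > 0" "ball z0 e \<subseteq> U" using opn z0U(1) open_contains_ball by blast
    have "z0 - e/2 \<in> U" using e by (intro subsetD[OF e(2)]) (auto simp: dist_real_def)
    moreover have "z < z0 - e/2" if "z \<in> U" "f z = 0" "z < z0" for z
      using True that z0U unfolding Zq_def by auto
    ultimately show ?thesis using that e by force
  next
    case False
    define z1 where "z1 = Max (Zq - {z0})"
    have fin2: "finite (Zq - {z0})" using finZq by simp
    have z1: "z1 \<in> Zq - {z0}" "\<And>z. z \<in> Zq - {z0} \<Longrightarrow> z \<le> z1"
      using Max_in[OF fin2 False] Max_ge[OF fin2] z1_def by auto
    have z1z0: "z1 < z0" using z1(1) z0(2)[of z1] by auto
    have z1U: "z1 \<in> U" using z1(1) unfolding Zq_def by auto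
    have "(z1 + z0)/2 \<in> U" by (rule conv[OF z1U z0U(1)]) (use z1z0 in auto)
    moreover have "z < (z1 + z0)/2" if "z \<in> U" "f z = 0" "z < z0" for z
    proof -
      have "z \<in> Zq - {z0}" using that z0U unfolding Zq_def by auto
      then have "z \<le> z1" by (rule z1(2))
      then show ?thesis using z1z0 by (simp add: field_simps)
    qed
    ultimately show ?thesis using that z1z0 by force
  qed
  have fq': "f q' \<noteq> 0" using q'(1,2) q'(3)[of q'] by auto
  have Zq'eq: "{z\<in>U. f z = 0 \<and> z < q'} = Zq - {z0}"
  proof (intro set_eqI iffI)
    fix z assume "z \<in> {z\<in>U. f z = 0 \<and> z < q'}"
    then show "z \<in> Zq - {z0}" using q'(2) z0U unfolding Zq_def by auto
  next
    fix z assume z: "z \<in> Zq - {z0}"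
    then have "z \<le> z0" using z0(2) by auto
    with z have "z < z0" by auto
    with z show "z \<in> {z\<in>U. f z = 0 \<and> z < q'}" using q'(3)[of z] unfolding Zq_def by auto
  qed
  have cq': "card {z\<in>U. f z = 0 \<and> z < q'} = n" using Zq'eq q(3) z0 finZq Zq_def by simp
  have IH: "int (card {z\<in>U. f z = 0 \<and> z < q' \<and> down_cross f z}) - int (card {z\<in>U. f z = 0 \<and> z < q' \<and> up_cross f z})
       = (if f q' < 0 then 1 else 0)" using Suc.IH[OF q'(1) fq' cq'] .
  have nzL: "\<forall>x. q' \<le> x \<and> x < z0 \<longrightarrow> f x \<noteq> 0"
  proof (intro allI impI)
    fix x assume x: "q' \<le> x \<and> x < z0"
    then have "x \<in> U" using conv[of q' z0 x] q' z0U by auto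
    then show "f x \<noteq> 0" using q'(3)[of x] x by auto
  qed
  have nzR: "\<forall>x. z0 < x \<and> x \<le> q \<longrightarrow> f x \<noteq> 0"
  proof (intro allI impI)
    fix x assume x: "z0 < x \<and> x \<le> q"
    then have "x \<in> U" using conv[of z0 q x] q z0U by auto
    show "f x \<noteq> 0"
    proof
      assume "f x = 0"
      show False
      proof (cases "x = q")
        case True then show False using q(2) \<open>f x = 0\<close> by simp
      next
        case False
        then have "x \<in> Zq" using x \<open>x \<in> U\<close> \<open>f x = 0\<close> unfolding Zq_def by auto
        then show False using z0(2)[of x] x by auto
      qed
    qed
  qed
  have sL: "\<And>u. q' \<le> u \<Longrightarrow> u < z0 \<Longrightarrow> (f u > 0) = (f q' > 0)"
    using sign_const[OF cont] nzL by (metis order.trans order_le_less_trans order.refl)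
  have sR: "\<And>u. z0 < u \<Longrightarrow> u \<le> q \<Longrightarrow> (f u > 0) = (f q > 0)"
    using sign_const[OF cont] nzR by (metis order.trans order_less_le_trans order.refl)
  have nzu: "\<And>u. q' \<le> u \<Longrightarrow> u < z0 \<Longrightarrow> f u \<noteq> 0" "\<And>u. z0 < u \<Longrightarrow> u \<le> q \<Longrightarrow> f u \<noteq> 0"
    using nzL nzR by auto
  have mn: "min (z0 - q') (q - z0) \<le> z0 - q'" "min (z0 - q') (q - z0) \<le> q - z0" by auto
  have dn: "down_cross f z0 \<longleftrightarrow> f q' > 0 \<and> f q < 0"
  proof
    assume "down_cross f z0"
    then obtain e where e: "e > 0" "\<forall>u. z0 - e < u \<and> u < z0 \<longrightarrow> f u > 0" "\<forall>u. z0 < u \<and> u < z0 + e \<longrightarrow> f u < 0"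
      unfolding down_cross_def by blast
    have fm0: "f (max q' (z0 - e/2)) > 0" using e(2)[rule_format, of "max q' (z0 - e/2)"] e(1) q'(2) by auto
    have m0: "q' \<le> max q' (z0 - e/2)" "max q' (z0 - e/2) < z0" using e(1) q'(2) by auto
    have "f q' > 0" using sL[OF m0] fm0 by simp
    moreover have fm: "f (min q (z0 + e/2)) < 0" using e(3)[rule_format, of "min q (z0 + e/2)"] e(1) z0U by auto
    have m1: "z0 < min q (z0 + e/2)" "min q (z0 + e/2) \<le> q" using e(1) z0U by auto
    have "\<not> f q > 0" using sR[OF m1] fm by simp
    then have "f q < 0" using q(2) by simp
    ultimately show "f q' > 0 \<and> f q < 0" by simp
  next
    assume a: "f q' > 0 \<and> f q < 0"
    show "down_cross f z0" unfolding down_cross_def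
    proof (intro exI[of _ "min (z0 - q') (q - z0)"] conjI allI impI)
      show "0 < min (z0 - q') (q - z0)" using q' z0U by auto
    next
      fix u assume u: "z0 - min (z0 - q') (q - z0) < u \<and> u < z0"
      have m: "q' \<le> u" "u < z0" using u mn by linarith+
      show "f u > 0" using sL[OF m] a by simp
    next
      fix u assume u: "z0 < u \<and> u < z0 + min (z0 - q') (q - z0)"
      have m: "z0 < u" "u \<le> q" using u mn by linarith+
      have "\<not> f u > 0" using sR[OF m] a by simp
      moreover have "f u \<noteq> 0" using nzu(2)[OF m] .
      ultimately show "f u < 0" by simp
    qed
  qed
  have upc: "up_cross f z0 \<longleftrightarrow> f q' < 0 \<and> f q > 0"
  proof
    assume "up_cross f z0"
    then obtain e where e: "e > 0" "\<forall>u. z0 - e < u \<and> u < z0 \<longrightarrow> f u < 0" "\<forall>u. z0 < u \<and> u < z0 + e \<longrightarrow> f u > 0"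
      unfolding up_cross_def by blast
    have fm: "f (max q' (z0 - e/2)) < 0" using e(2)[rule_format, of "max q' (z0 - e/2)"] e(1) q'(2) by auto
    have m1: "q' \<le> max q' (z0 - e/2)" "max q' (z0 - e/2) < z0" using e(1) q'(2) by auto
    have "\<not> f q' > 0" using sL[OF m1] fm by simp
    then have "f q' < 0" using fq' by simp
    moreover have fm: "f (min q (z0 + e/2)) > 0" using e(3)[rule_format, of "min q (z0 + e/2)"] e(1) z0U by auto
    have m1: "z0 < min q (z0 + e/2)" "min q (z0 + e/2) \<le> q" using e(1) z0U by auto
    have "f q > 0" using sR[OF m1] fm by simp
    ultimately show "f q' < 0 \<and> f q > 0" by simp
  next
    assume a: "f q' < 0 \<and> f q > 0"
    show "up_cross f z0" unfolding up_cross_def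
    proof (intro exI[of _ "min (z0 - q') (q - z0)"] conjI allI impI)
      show "0 < min (z0 - q') (q - z0)" using q' z0U by auto
    next
      fix u assume u: "z0 - min (z0 - q') (q - z0) < u \<and> u < z0"
      have m: "q' \<le> u" "u < z0" using u mn by linarith+
      have "\<not> f u > 0" using sL[OF m] a by simp
      moreover have "f u \<noteq> 0" using nzu(1)[OF m] .
      ultimately show "f u < 0" by simp
    next
      fix u assume u: "z0 < u \<and> u < z0 + min (z0 - q') (q - z0)"
      have m: "z0 < u" "u \<le> q" using u mn by linarith+
      show "f u > 0" using sR[OF m] a by simp
    qed
  qed
  have splitD: "{z\<in>U. f z = 0 \<and> z < q \<and> down_cross f z} =
      {z\<in>U. f z = 0 \<and> z < q' \<and> down_cross f z} \<union> (if down_cross f z0 then {z0} else {})"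
  proof (intro set_eqI iffI)
    fix z assume z: "z \<in> {z\<in>U. f z = 0 \<and> z < q \<and> down_cross f z}"
    show "z \<in> {z\<in>U. f z = 0 \<and> z < q' \<and> down_cross f z} \<union> (if down_cross f z0 then {z0} else {})"
    proof (cases "z = z0")
      case False
      then have "z \<in> Zq - {z0}" using z unfolding Zq_def by auto
      then show ?thesis using Zq'eq z by auto
    qed (use z in auto)
  next
    fix z assume z: "z \<in> {z\<in>U. f z = 0 \<and> z < q' \<and> down_cross f z} \<union> (if down_cross f z0 then {z0} else {})"
    then show "z \<in> {z\<in>U. f z = 0 \<and> z < q \<and> down_cross f z}"
      using z0U q'(2) by (auto split: if_splits)
  qed
  have splitU: "{z\<in>U. f z = 0 \<and> z < q \<and> up_cross f z} =
      {z\<in>U. f z = 0 \<and> z < q' \<and> up_cross f z} \<union> (if up_cross f z0 then {z0} else {})"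
  proof (intro set_eqI iffI)
    fix z assume z: "z \<in> {z\<in>U. f z = 0 \<and> z < q \<and> up_cross f z}"
    show "z \<in> {z\<in>U. f z = 0 \<and> z < q' \<and> up_cross f z} \<union> (if up_cross f z0 then {z0} else {})"
    proof (cases "z = z0")
      case False
      then have "z \<in> Zq - {z0}" using z unfolding Zq_def by auto
      then show ?thesis using Zq'eq z by auto
    qed (use z in auto)
  next
    fix z assume z: "z \<in> {z\<in>U. f z = 0 \<and> z < q' \<and> up_cross f z} \<union> (if up_cross f z0 then {z0} else {})"
    then show "z \<in> {z\<in>U. f z = 0 \<and> z < q \<and> up_cross f z}"
      using z0U q'(2) by (auto split: if_splits)
  qed
  have fD: "finite {z\<in>U. f z = 0 \<and> z < q' \<and> down_cross f z}" "finite {z\<in>U. f z = 0 \<and> z < q' \<and> up_cross f z}"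
    by (rule finite_subset[OF _ fin], auto)+
  have nin: "z0 \<notin> {z\<in>U. f z = 0 \<and> z < q' \<and> down_cross f z}" "z0 \<notin> {z\<in>U. f z = 0 \<and> z < q' \<and> up_cross f z}"
    using q' by auto
  show "int (card {z\<in>U. f z = 0 \<and> z < q \<and> down_cross f z}) - int (card {z\<in>U. f z = 0 \<and> z < q \<and> up_cross f z})
       = (if f q < 0 then 1 else 0)"
    unfolding splitD splitU using IH fD nin dn upc fq' q(2)
    by (auto simp: card_insert_if)
qed

lemma count_cross:
  fixes f :: "real \<Rightarrow> real" and U :: "real set"
  assumes cont: "\<forall>x. isCont f x" and opn: "open U"
    and conv: "\<And>x y z. x \<in> U \<Longrightarrow> y \<in> U \<Longrightarrow> x \<le> z \<Longrightarrow> z \<le> y \<Longrightarrow> z \<in> U"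
    and fin: "finite {z\<in>U. f z = 0}"
    and start: "\<And>p. p \<in> U \<Longrightarrow> (\<And>z. z \<in> U \<Longrightarrow> f z = 0 \<Longrightarrow> p < z) \<Longrightarrow> f p > 0"
  shows "card {z\<in>U. f z = 0 \<and> up_cross f z} \<le> card {z\<in>U. f z = 0 \<and> down_cross f z}"
proof (cases "{z\<in>U. f z = 0} = {}")
  case True
  then have e0: "{z\<in>U. f z = 0 \<and> up_cross f z} = {}" by auto
  show ?thesis unfolding e0 card.empty by (rule le0)
next
  case False
  define zm where "zm = Max {z\<in>U. f z = 0}"
  have zm: "zm \<in> {z\<in>U. f z = 0}" "\<And>z. z \<in> {z\<in>U. f z = 0} \<Longrightarrow> z \<le> zm"
    using Max_in[OF fin False] Max_ge[OF fin] zm_def by auto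
  obtain e where e: "e > 0" "ball zm e \<subseteq> U" using opn zm(1) open_contains_ball by blast
  define q where "q = zm + e/2"
  have qU: "q \<in> U" using e unfolding q_def by (intro subsetD[OF e(2)]) (auto simp: dist_real_def)
  have qgt: "zm < q" using e q_def by simp
  have fq: "f q \<noteq> 0"
  proof
    assume "f q = 0"
    then have "q \<le> zm" using zm(2)[of q] qU by auto
    with qgt show False by simp
  qed
  have eqs: "\<And>P. {z\<in>U. f z = 0 \<and> z < q \<and> P z} = {z\<in>U. f z = 0 \<and> P z}"
  proof (intro set_eqI iffI)
    fix P z assume "z \<in> {z\<in>U. f z = 0 \<and> P z}"
    then show "z \<in> {z\<in>U. f z = 0 \<and> z < q \<and> P z}" using zm(2)[of z] qgt by auto
  qed auto
  have "int (card {z\<in>U. f z = 0 \<and> z < q \<and> down_cross f z}) - int (card {z\<in>U. f z = 0 \<and> z < q \<and> up_cross f z})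
       = (if f q < 0 then 1 else 0)"
    by (rule count_cross_aux[OF cont opn conv fin start qU fq refl])
  then show ?thesis unfolding eqs by (auto split: if_splits)
qed


definition Xc :: "nat \<Rightarrow> (nat\<Rightarrow>nat\<Rightarrow>nat) \<Rightarrow> (nat\<Rightarrow>nat\<Rightarrow>nat) \<Rightarrow> (nat\<Rightarrow>real) \<Rightarrow> real \<Rightarrow> nat \<Rightarrow> real" where
  "Xc s \<alpha> \<beta> c t = (\<lambda>i. if i \<in> {1..s} then coefA \<alpha> \<beta> i * t + coefB \<alpha> \<beta> c i else 0)"
definition mv :: "nat \<Rightarrow> (nat\<Rightarrow>nat\<Rightarrow>nat) \<Rightarrow> nat \<Rightarrow> (nat\<Rightarrow>real) \<Rightarrow> real" where
  "mv s \<alpha> j x = (\<Prod>l\<in>{1..s}. x l ^ \<alpha> l j)"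
definition Gf :: "nat \<Rightarrow> (nat\<Rightarrow>nat\<Rightarrow>nat) \<Rightarrow> (nat\<Rightarrow>real) \<Rightarrow> real \<Rightarrow> (nat\<Rightarrow>real) \<Rightarrow> real" where
  "Gf s \<alpha> \<kappa> lam x = \<kappa> 1 * mv s \<alpha> 1 x + lam * \<kappa> 2 * mv s \<alpha> 2 x"
definition Dom :: "nat \<Rightarrow> (nat\<Rightarrow>nat\<Rightarrow>nat) \<Rightarrow> (nat\<Rightarrow>nat\<Rightarrow>nat) \<Rightarrow> (nat\<Rightarrow>real) \<Rightarrow> real set" where
  "Dom s \<alpha> \<beta> c = {t. \<forall>i\<in>{1..s}. 0 < coefA \<alpha> \<beta> i * t + coefB \<alpha> \<beta> c i}"

lemma coefA1[simp]: "coefA \<alpha> \<beta> 1 = 1" "coefA \<alpha> \<beta> (Suc 0) = 1" by (simp_all add: coefA_def)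
lemma coefB1[simp]: "coefB \<alpha> \<beta> c 1 = 0" "coefB \<alpha> \<beta> c (Suc 0) = 0" by (simp_all add: coefB_def)

lemma stoich_A: "stoich \<alpha> \<beta> 1 1 \<noteq> 0 \<Longrightarrow> stoich \<alpha> \<beta> i 1 = stoich \<alpha> \<beta> 1 1 * coefA \<alpha> \<beta> i"
  by (simp add: coefA_def)

lemma compat_param:
  assumes a: "stoich \<alpha> \<beta> 1 1 \<noteq> 0" and x: "x \<in> compat_class s \<alpha> \<beta> c" and i: "i \<in> {1..s}"
  shows "x i = coefA \<alpha> \<beta> i * x 1 + coefB \<alpha> \<beta> c i"
proof (cases "i = 1")
  case True then show ?thesis by simp
next
  case False
  then have "i \<in> {2..s}" using i by auto
  then have "stoich \<alpha> \<beta> i 1 * x 1 - stoich \<alpha> \<beta> 1 1 * x i = c (i - 1)" using x unfolding compat_class_def by auto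
  then show ?thesis using a False unfolding coefA_def coefB_def by (simp add: field_simps)
qed

lemma compat_Xc:
  assumes a: "stoich \<alpha> \<beta> 1 1 \<noteq> 0" and x: "x \<in> compat_class s \<alpha> \<beta> c"
  shows "x = Xc s \<alpha> \<beta> c (x 1)"
proof
  fix i show "x i = Xc s \<alpha> \<beta> c (x 1) i"
  proof (cases "i \<in> {1..s}")
    case True
    then show ?thesis using compat_param[OF a x True] unfolding Xc_def by simp
  next
    case False
    then show ?thesis using x unfolding Xc_def compat_class_def by auto
  qed
qed

lemma Xc_1[simp]: "1 \<le> s \<Longrightarrow> Xc s \<alpha> \<beta> c t 1 = t" by (simp add: Xc_def)

lemma Xc_inj: "1 \<le> s \<Longrightarrow> inj (Xc s \<alpha> \<beta> c)"
  by (rule injI) (metis Xc_1)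

lemma Xc_compat:
  assumes a: "stoich \<alpha> \<beta> 1 1 \<noteq> 0" and s: "1 \<le> s" and t: "t \<in> Dom s \<alpha> \<beta> c"
  shows "Xc s \<alpha> \<beta> c t \<in> compat_class s \<alpha> \<beta> c"
  unfolding compat_class_def
proof (intro CollectI conjI ballI allI impI)
  fix i assume "i \<notin> {1..s}" then show "Xc s \<alpha> \<beta> c t i = 0" unfolding Xc_def by auto
next
  fix i assume "i \<in> {1..s}" then show "0 \<le> Xc s \<alpha> \<beta> c t i" using t by (auto simp: Xc_def Dom_def less_imp_le)
next
  fix i assume i: "i \<in> {2..s}"
  then have "i \<in> {1..s}" "i \<noteq> 1" by auto
  then show "stoich \<alpha> \<beta> i 1 * Xc s \<alpha> \<beta> c t 1 - stoich \<alpha> \<beta> 1 1 * Xc s \<alpha> \<beta> c t i = c (i - 1)"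
    using s a by (simp add: Xc_def coefA_def coefB_def field_simps)
qed

lemma mv_pos: "(\<And>l. l \<in> {1..s} \<Longrightarrow> x l > 0) \<Longrightarrow> mv s \<alpha> j x > 0"
  unfolding mv_def by (rule prod_pos) auto

lemma rfield_expand: "rfield s \<alpha> \<beta> \<kappa> x i = stoich \<alpha> \<beta> i 1 * (\<kappa> 1 * mv s \<alpha> 1 x) + stoich \<alpha> \<beta> i 2 * (\<kappa> 2 * mv s \<alpha> 2 x)"
  by (simp add: rfield_def mv_def)

lemma prop_lemma:
  assumes a: "stoich \<alpha> \<beta> 1 1 \<noteq> 0" and s: "1 \<le> s" and k: "\<kappa> 1 > 0" "\<kappa> 2 > 0"
    and x: "x \<in> pos_steady_states s \<alpha> \<beta> \<kappa> c"
  shows "\<forall>i\<in>{1..s}. stoich \<alpha> \<beta> i 2 = (stoich \<alpha> \<beta> 1 2 / stoich \<alpha> \<beta> 1 1) * stoich \<alpha> \<beta> i 1"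
    and "stoich \<alpha> \<beta> 1 2 / stoich \<alpha> \<beta> 1 1 < 0"
proof -
  have xp: "\<And>l. l \<in> {1..s} \<Longrightarrow> x l > 0" and rf: "\<And>i. i \<in> {1..s} \<Longrightarrow> rfield s \<alpha> \<beta> \<kappa> x i = 0"
    using x unfolding pos_steady_states_def by auto
  define m1 where "m1 = \<kappa> 1 * mv s \<alpha> 1 x"
  define m2 where "m2 = \<kappa> 2 * mv s \<alpha> 2 x"
  have m1: "m1 > 0" unfolding m1_def using k mv_pos[OF xp] by simp
  have m2: "m2 > 0" unfolding m2_def using k mv_pos[OF xp] by simp
  have eq: "\<And>i. i \<in> {1..s} \<Longrightarrow> stoich \<alpha> \<beta> i 2 = - (m1 / m2) * stoich \<alpha> \<beta> i 1"
  proof -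
    fix i assume "i \<in> {1..s}"
    then have "stoich \<alpha> \<beta> i 1 * m1 + stoich \<alpha> \<beta> i 2 * m2 = 0" using rf rfield_expand m1_def m2_def by metis
    then show "stoich \<alpha> \<beta> i 2 = - (m1 / m2) * stoich \<alpha> \<beta> i 1" using m2 by (simp add: field_simps) 
  qed
  have l: "stoich \<alpha> \<beta> 1 2 / stoich \<alpha> \<beta> 1 1 = - (m1 / m2)" using eq[of 1] s a by simp
  show "\<forall>i\<in>{1..s}. stoich \<alpha> \<beta> i 2 = (stoich \<alpha> \<beta> 1 2 / stoich \<alpha> \<beta> 1 1) * stoich \<alpha> \<beta> i 1"
    unfolding l using eq by simp
  have "m1 / m2 > 0" using m1 m2 by (rule divide_pos_pos)
  then show "stoich \<alpha> \<beta> 1 2 / stoich \<alpha> \<beta> 1 1 < 0" unfolding l by linarith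
qed

lemma rfield_Gf:
  assumes p: "\<forall>i\<in>{1..s}. stoich \<alpha> \<beta> i 2 = lam * stoich \<alpha> \<beta> i 1" and i: "i \<in> {1..s}"
  shows "rfield s \<alpha> \<beta> \<kappa> x i = stoich \<alpha> \<beta> i 1 * Gf s \<alpha> \<kappa> lam x"
proof -
  have "stoich \<alpha> \<beta> i 2 = lam * stoich \<alpha> \<beta> i 1" using p i by blast
  then show ?thesis unfolding rfield_expand Gf_def by (simp add: algebra_simps)
qed

lemma pss_char:
  assumes a: "stoich \<alpha> \<beta> 1 1 \<noteq> 0" and s: "1 \<le> s"
    and p: "\<forall>i\<in>{1..s}. stoich \<alpha> \<beta> i 2 = lam * stoich \<alpha> \<beta> i 1"
  shows "pos_steady_states s \<alpha> \<beta> \<kappa> c = Xc s \<alpha> \<beta> c ` {t \<in> Dom s \<alpha> \<beta> c. Gf s \<alpha> \<kappa> lam (Xc s \<alpha> \<beta> c t) = 0}"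
proof (intro set_eqI iffI)
  fix x assume x: "x \<in> pos_steady_states s \<alpha> \<beta> \<kappa> c"
  then have xc: "x \<in> compat_class s \<alpha> \<beta> c" and xp: "\<forall>i\<in>{1..s}. x i > 0" and rf: "\<forall>i\<in>{1..s}. rfield s \<alpha> \<beta> \<kappa> x i = 0"
    unfolding pos_steady_states_def by auto
  have xe: "x = Xc s \<alpha> \<beta> c (x 1)" by (rule compat_Xc[OF a xc])
  have "\<forall>i\<in>{1..s}. 0 < coefA \<alpha> \<beta> i * x 1 + coefB \<alpha> \<beta> c i"
  proof
    fix i assume i: "i \<in> {1..s}"
    show "0 < coefA \<alpha> \<beta> i * x 1 + coefB \<alpha> \<beta> c i" using xp[rule_format, OF i] compat_param[OF a xc i] by simp
  qed
  then have d: "x 1 \<in> Dom s \<alpha> \<beta> c" unfolding Dom_def by simp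
  have s1: "1 \<in> {1..s}" using s by simp
  have "rfield s \<alpha> \<beta> \<kappa> x 1 = stoich \<alpha> \<beta> 1 1 * Gf s \<alpha> \<kappa> lam x" by (rule rfield_Gf[OF p s1])
  then have "Gf s \<alpha> \<kappa> lam x = 0" using rf s1 a by simp
  then have "Gf s \<alpha> \<kappa> lam (Xc s \<alpha> \<beta> c (x 1)) = 0" using xe by simp
  then have "x 1 \<in> {t \<in> Dom s \<alpha> \<beta> c. Gf s \<alpha> \<kappa> lam (Xc s \<alpha> \<beta> c t) = 0}" using d by simp
  then show "x \<in> Xc s \<alpha> \<beta> c ` {t \<in> Dom s \<alpha> \<beta> c. Gf s \<alpha> \<kappa> lam (Xc s \<alpha> \<beta> c t) = 0}"
    using xe by (rule rev_image_eqI)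
next
  fix x assume "x \<in> Xc s \<alpha> \<beta> c ` {t \<in> Dom s \<alpha> \<beta> c. Gf s \<alpha> \<kappa> lam (Xc s \<alpha> \<beta> c t) = 0}"
  then obtain t where t: "t \<in> Dom s \<alpha> \<beta> c" "Gf s \<alpha> \<kappa> lam (Xc s \<alpha> \<beta> c t) = 0" and x: "x = Xc s \<alpha> \<beta> c t" by auto
  have c1: "x \<in> compat_class s \<alpha> \<beta> c" using Xc_compat[OF a s t(1)] x by simp
  have c2: "\<forall>i\<in>{1..s}. x i > 0" using t(1) x unfolding Dom_def Xc_def by simp
  have c3: "\<forall>i\<in>{1..s}. rfield s \<alpha> \<beta> \<kappa> x i = 0"
  proof
    fix i assume i: "i \<in> {1..s}"
    show "rfield s \<alpha> \<beta> \<kappa> x i = 0" using rfield_Gf[OF p i, of \<kappa> x] t(2) x by simp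
  qed
  show "x \<in> pos_steady_states s \<alpha> \<beta> \<kappa> c"
    using c1 c2 c3 unfolding pos_steady_states_def by simp
qed


definition pdj :: "nat \<Rightarrow> (nat\<Rightarrow>nat\<Rightarrow>nat) \<Rightarrow> nat \<Rightarrow> nat \<Rightarrow> (nat\<Rightarrow>real) \<Rightarrow> real" where
  "pdj s \<alpha> j k x = real (\<alpha> k j) * x k ^ (\<alpha> k j - 1) * (\<Prod>l\<in>{1..s}-{k}. x l ^ \<alpha> l j)"

definition gd :: "nat \<Rightarrow> (nat\<Rightarrow>nat\<Rightarrow>nat) \<Rightarrow> (nat\<Rightarrow>nat\<Rightarrow>nat) \<Rightarrow> (nat\<Rightarrow>real) \<Rightarrow> real \<Rightarrow> (nat\<Rightarrow>real) \<Rightarrow> real \<Rightarrow> real" where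
  "gd s \<alpha> \<beta> \<kappa> lam c t = (\<Sum>k\<in>{1..s}. coefA \<alpha> \<beta> k *
      (\<kappa> 1 * pdj s \<alpha> 1 k (Xc s \<alpha> \<beta> c t) + lam * \<kappa> 2 * pdj s \<alpha> 2 k (Xc s \<alpha> \<beta> c t)))"

lemma mv_upd:
  assumes k: "k \<in> {1..s}"
  shows "mv s \<alpha> j (x(k:=u)) = u ^ \<alpha> k j * (\<Prod>l\<in>{1..s}-{k}. x l ^ \<alpha> l j)"
proof -
  have "mv s \<alpha> j (x(k:=u)) = (x(k:=u)) k ^ \<alpha> k j * (\<Prod>l\<in>{1..s}-{k}. (x(k:=u)) l ^ \<alpha> l j)"
    unfolding mv_def by (rule prod.remove[OF finite_atLeastAtMost k])
  also have "(x(k:=u)) k = u" by simp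
  also have "(\<Prod>l\<in>{1..s}-{k}. (x(k:=u)) l ^ \<alpha> l j) = (\<Prod>l\<in>{1..s}-{k}. x l ^ \<alpha> l j)"
    by (rule prod.cong) auto
  finally show ?thesis .
qed

lemma mv_deriv:
  assumes k: "k \<in> {1..s}"
  shows "((\<lambda>u. mv s \<alpha> j (x(k:=u))) has_real_derivative pdj s \<alpha> j k x) (at (x k))"
proof -
  have fe: "(\<lambda>u. mv s \<alpha> j (x(k:=u))) = (\<lambda>u. u ^ \<alpha> k j * (\<Prod>l\<in>{1..s}-{k}. x l ^ \<alpha> l j))"
    using mv_upd[OF k] by auto
  show ?thesis unfolding fe pdj_def
    by (rule DERIV_cong[OF DERIV_cmult_right[OF DERIV_pow[of "\<alpha> k j" "x k" UNIV]]]) simp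
qed

lemma lin_pow_deriv:
  "((\<lambda>t. (a * t + b) ^ n) has_real_derivative (real n * (a * (a * t + b) ^ (n - 1)))) (at t)"
proof -
  have "((\<lambda>t. a * t + b) has_real_derivative a) (at t)"
    by (rule derivative_eq_intros refl | simp)+
  from DERIV_power[OF this, of n] show ?thesis by simp
qed

lemma mv_Xc_deriv:
  "((\<lambda>t. mv s \<alpha> j (Xc s \<alpha> \<beta> c t)) has_real_derivative
     (\<Sum>k\<in>{1..s}. coefA \<alpha> \<beta> k * pdj s \<alpha> j k (Xc s \<alpha> \<beta> c t))) (at t)"
proof -
  define A where "A = coefA \<alpha> \<beta>"
  define B where "B = coefB \<alpha> \<beta> c"
  have fe: "(\<lambda>t. mv s \<alpha> j (Xc s \<alpha> \<beta> c t)) = (\<lambda>t. \<Prod>l\<in>{1..s}. (A l * t + B l) ^ \<alpha> l j)"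
    unfolding mv_def Xc_def A_def B_def by (intro ext prod.cong) auto
  have d: "((\<lambda>t. \<Prod>l\<in>{1..s}. (A l * t + B l) ^ \<alpha> l j) has_real_derivative
      (\<Sum>l\<in>{1..s}. (real (\<alpha> l j) * (A l * (A l * t + B l) ^ (\<alpha> l j - 1))) *
         (\<Prod>m\<in>{1..s}-{l}. (A m * t + B m) ^ \<alpha> m j))) (at t)"
    by (rule has_field_derivative_prod) (rule lin_pow_deriv)
  have eq: "(\<Sum>l\<in>{1..s}. (real (\<alpha> l j) * (A l * (A l * t + B l) ^ (\<alpha> l j - 1))) *
         (\<Prod>m\<in>{1..s}-{l}. (A m * t + B m) ^ \<alpha> m j))
      = (\<Sum>k\<in>{1..s}. coefA \<alpha> \<beta> k * pdj s \<alpha> j k (Xc s \<alpha> \<beta> c t))"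
  proof (rule sum.cong[OF refl])
    fix k assume k: "k \<in> {1..s}"
    have p: "(\<Prod>m\<in>{1..s}-{k}. Xc s \<alpha> \<beta> c t m ^ \<alpha> m j) = (\<Prod>m\<in>{1..s}-{k}. (A m * t + B m) ^ \<alpha> m j)"
      unfolding Xc_def A_def B_def by (rule prod.cong) auto
    show "(real (\<alpha> k j) * (A k * (A k * t + B k) ^ (\<alpha> k j - 1))) *
         (\<Prod>m\<in>{1..s}-{k}. (A m * t + B m) ^ \<alpha> m j) = coefA \<alpha> \<beta> k * pdj s \<alpha> j k (Xc s \<alpha> \<beta> c t)"
      unfolding pdj_def p using k by (simp add: Xc_def A_def B_def)
  qed
  show ?thesis unfolding fe using d eq by simp
qed

lemma g_deriv:
  "((\<lambda>t. Gf s \<alpha> \<kappa> lam (Xc s \<alpha> \<beta> c t)) has_real_derivative gd s \<alpha> \<beta> \<kappa> lam c t) (at t)"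
proof -
  have d: "((\<lambda>t. \<kappa> 1 * mv s \<alpha> 1 (Xc s \<alpha> \<beta> c t) + lam * \<kappa> 2 * mv s \<alpha> 2 (Xc s \<alpha> \<beta> c t)) has_real_derivative
     \<kappa> 1 * (\<Sum>k\<in>{1..s}. coefA \<alpha> \<beta> k * pdj s \<alpha> 1 k (Xc s \<alpha> \<beta> c t)) +
     lam * \<kappa> 2 * (\<Sum>k\<in>{1..s}. coefA \<alpha> \<beta> k * pdj s \<alpha> 2 k (Xc s \<alpha> \<beta> c t))) (at t)"
    by (intro DERIV_add DERIV_cmult mv_Xc_deriv)
  have "\<kappa> 1 * (\<Sum>k\<in>{1..s}. coefA \<alpha> \<beta> k * pdj s \<alpha> 1 k (Xc s \<alpha> \<beta> c t)) +
     lam * \<kappa> 2 * (\<Sum>k\<in>{1..s}. coefA \<alpha> \<beta> k * pdj s \<alpha> 2 k (Xc s \<alpha> \<beta> c t)) = gd s \<alpha> \<beta> \<kappa> lam c t"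
    unfolding gd_def by (simp add: sum_distrib_left sum.distrib algebra_simps)
  then show ?thesis using d unfolding Gf_def by simp
qed

lemma jac_eq:
  assumes p: "\<forall>i\<in>{1..s}. stoich \<alpha> \<beta> i 2 = lam * stoich \<alpha> \<beta> i 1" and i: "i \<in> {1..s}" and k: "k \<in> {1..s}"
  shows "jac s \<alpha> \<beta> \<kappa> x i k = stoich \<alpha> \<beta> i 1 * (\<kappa> 1 * pdj s \<alpha> 1 k x + lam * \<kappa> 2 * pdj s \<alpha> 2 k x)"
proof -
  have fe: "(\<lambda>u. rfield s \<alpha> \<beta> \<kappa> (x(k:=u)) i) =
    (\<lambda>u. stoich \<alpha> \<beta> i 1 * (\<kappa> 1 * mv s \<alpha> 1 (x(k:=u))) + stoich \<alpha> \<beta> i 2 * (\<kappa> 2 * mv s \<alpha> 2 (x(k:=u))))"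
    by (simp add: rfield_expand)
  have d: "((\<lambda>u. stoich \<alpha> \<beta> i 1 * (\<kappa> 1 * mv s \<alpha> 1 (x(k:=u))) + stoich \<alpha> \<beta> i 2 * (\<kappa> 2 * mv s \<alpha> 2 (x(k:=u))))
     has_real_derivative stoich \<alpha> \<beta> i 1 * (\<kappa> 1 * pdj s \<alpha> 1 k x) + stoich \<alpha> \<beta> i 2 * (\<kappa> 2 * pdj s \<alpha> 2 k x)) (at (x k))"
    by (intro DERIV_add DERIV_cmult mv_deriv[OF k])
  have "jac s \<alpha> \<beta> \<kappa> x i k = stoich \<alpha> \<beta> i 1 * (\<kappa> 1 * pdj s \<alpha> 1 k x) + stoich \<alpha> \<beta> i 2 * (\<kappa> 2 * pdj s \<alpha> 2 k x)"
    unfolding jac_def fe using DERIV_imp_deriv[OF d] .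
  also have "\<dots> = stoich \<alpha> \<beta> i 1 * (\<kappa> 1 * pdj s \<alpha> 1 k x + lam * \<kappa> 2 * pdj s \<alpha> 2 k x)"
    using p i by (simp add: algebra_simps)
  finally show ?thesis .
qed

lemma stable_sign:
  assumes a: "stoich \<alpha> \<beta> 1 1 \<noteq> 0" and s: "1 \<le> s"
    and p: "\<forall>i\<in>{1..s}. stoich \<alpha> \<beta> i 2 = lam * stoich \<alpha> \<beta> i 1"
    and st: "stable s \<alpha> \<beta> \<kappa> (Xc s \<alpha> \<beta> c t)"
  shows "stoich \<alpha> \<beta> 1 1 * gd s \<alpha> \<beta> \<kappa> lam c t < 0"
proof -
  define x where "x = Xc s \<alpha> \<beta> c t"
  define J where "J = jac s \<alpha> \<beta> \<kappa> x"
  define P where "P k = \<kappa> 1 * pdj s \<alpha> 1 k x + lam * \<kappa> 2 * pdj s \<alpha> 2 k x" for k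
  define a0 where "a0 = stoich \<alpha> \<beta> 1 1"
  define \<mu> where "\<mu> = a0 * gd s \<alpha> \<beta> \<kappa> lam c t"
  define v where "v i = (if i \<in> {1..s} then stoich \<alpha> \<beta> i 1 else 0)" for i
  have s1: "1 \<in> {1..s}" using s by simp
  have v1: "v 1 = a0" using s1 unfolding v_def a0_def by simp
  have gdP: "gd s \<alpha> \<beta> \<kappa> lam c t = (\<Sum>k\<in>{1..s}. coefA \<alpha> \<beta> k * P k)"
    unfolding gd_def P_def x_def by simp
  have Jv: "mat_app s J v = (\<lambda>i. \<mu> * v i)"
  proof
    fix i show "mat_app s J v i = \<mu> * v i"
    proof (cases "i \<in> {1..s}")
      case True
      have "(\<Sum>k\<in>{1..s}. J i k * v k) = (\<Sum>k\<in>{1..s}. stoich \<alpha> \<beta> i 1 * a0 * (coefA \<alpha> \<beta> k * P k))"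
      proof (rule sum.cong[OF refl])
        fix k assume k: "k \<in> {1..s}"
        have "J i k = stoich \<alpha> \<beta> i 1 * P k" unfolding J_def P_def by (rule jac_eq[OF p True k])
        moreover have "v k = a0 * coefA \<alpha> \<beta> k" unfolding v_def a0_def using k stoich_A[OF a, of k] by simp
        ultimately show "J i k * v k = stoich \<alpha> \<beta> i 1 * a0 * (coefA \<alpha> \<beta> k * P k)" by simp
      qed
      also have "\<dots> = stoich \<alpha> \<beta> i 1 * \<mu>" unfolding \<mu>_def gdP by (simp add: sum_distrib_left algebra_simps)
      finally have e1: "(\<Sum>k\<in>{1..s}. J i k * v k) = stoich \<alpha> \<beta> i 1 * \<mu>" .
      have e2: "mat_app s J v i = (\<Sum>k\<in>{1..s}. J i k * v k)" using True unfolding mat_app_def by simp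
      have e3: "v i = stoich \<alpha> \<beta> i 1" using True unfolding v_def by simp
      show ?thesis unfolding e2 e1 e3 by simp
    next
      case False
      have "v i = 0" using False unfolding v_def by auto
      moreover have "mat_app s J v i = 0" using False unfolding mat_app_def by auto
      ultimately show ?thesis by simp
    qed
  qed
  have lin: "mat_app s J (\<lambda>i. \<theta> * v i) = (\<lambda>i. \<theta> * mat_app s J v i)" for \<theta>
    unfolding mat_app_def by (auto simp: sum_distrib_left algebra_simps)
  have vS: "v \<in> stoich_space s \<alpha> \<beta>"
    unfolding stoich_space_def v_def by (rule CollectI, rule exI[of _ 1], rule exI[of _ 0]) simp
  have Sv: "\<exists>\<theta>. w = (\<lambda>i. \<theta> * v i)" if wS: "w \<in> stoich_space s \<alpha> \<beta>" for w
  proof -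
    obtain a' b' where w: "\<forall>i. w i = (if i \<in> {1..s} then a' * stoich \<alpha> \<beta> i 1 + b' * stoich \<alpha> \<beta> i 2 else 0)"
      using wS unfolding stoich_space_def by blast
    have "w = (\<lambda>i. (a' + b' * lam) * v i)"
    proof
      fix i show "w i = (a' + b' * lam) * v i" using w p unfolding v_def by (auto simp: algebra_simps)
    qed
    then show ?thesis by blast
  qed
  have nd: "nondegenerate s \<alpha> \<beta> \<kappa> x" and ev: "\<forall>z. is_eigenvalue s J z \<and> z \<noteq> 0 \<longrightarrow> Re z < 0"
    using st unfolding stable_def x_def J_def by auto
  have "v \<in> mat_app s J ` stoich_space s \<alpha> \<beta>" using nd vS unfolding nondegenerate_def J_def by simp
  then obtain w where w: "w \<in> stoich_space s \<alpha> \<beta>" "mat_app s J w = v" by auto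
  obtain \<theta> where th: "w = (\<lambda>i. \<theta> * v i)" using Sv[OF w(1)] by blast
  have "v = (\<lambda>i. \<theta> * (\<mu> * v i))" using w(2) unfolding th lin Jv by simp
  then have "v 1 = \<theta> * (\<mu> * v 1)" by metis
  then have mu0: "\<mu> \<noteq> 0" using v1 a unfolding a0_def by auto
  have "is_eigenvalue s J (complex_of_real \<mu>)"
    unfolding is_eigenvalue_def
  proof (intro exI[of _ "\<lambda>i. complex_of_real (v i)"] conjI ballI)
    have "complex_of_real (v 1) \<noteq> 0" using v1 a a0_def by simp
    then show "\<exists>i\<in>{1..s}. complex_of_real (v i) \<noteq> 0" using s1 by blast
  next
    fix i assume i: "i \<in> {1..s}"
    have "(\<Sum>k\<in>{1..s}. J i k * v k) = \<mu> * v i" using fun_cong[OF Jv, of i] i unfolding mat_app_def by simp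
    then have "complex_of_real (\<Sum>k\<in>{1..s}. J i k * v k) = complex_of_real \<mu> * complex_of_real (v i)" by simp
    then show "(\<Sum>k\<in>{1..s}. complex_of_real (J i k) * complex_of_real (v k)) = complex_of_real \<mu> * complex_of_real (v i)"
      by simp
  qed
  then have "Re (complex_of_real \<mu>) < 0" using ev mu0 by auto
  then show ?thesis unfolding \<mu>_def a0_def by simp
qed

lemma deriv_down:
  fixes f :: "real \<Rightarrow> real"
  assumes d: "(f has_real_derivative D) (at z)" and D: "D < 0" and z: "f z = 0"
  shows "down_cross f z"
proof -
  obtain d1 where d1: "d1 > 0" "\<forall>h>0. h < d1 \<longrightarrow> f z < f (z - h)" using DERIV_neg_dec_left[OF d D] by blast
  obtain d2 where d2: "d2 > 0" "\<forall>h>0. h < d2 \<longrightarrow> f z > f (z + h)" using DERIV_neg_dec_right[OF d D] by blast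
  show ?thesis unfolding down_cross_def
  proof (intro exI[of _ "min d1 d2"] conjI allI impI)
    show "0 < min d1 d2" using d1 d2 by simp
  next
    fix u assume u: "z - min d1 d2 < u \<and> u < z"
    then have "0 < z - u" "z - u < d1" using min.cobounded1[of d1 d2] by linarith+
    then have "f z < f (z - (z - u))" using d1(2) by blast
    then show "f u > 0" using z by simp
  next
    fix u assume u: "z < u \<and> u < z + min d1 d2"
    then have "0 < u - z" "u - z < d2" using min.cobounded2[of d1 d2] by linarith+
    then have "f z > f (z + (u - z))" using d2(2) by blast
    then show "f u < 0" using z by simp
  qed
qed

lemma deriv_up:
  fixes f :: "real \<Rightarrow> real"
  assumes d: "(f has_real_derivative D) (at z)" and D: "D > 0" and z: "f z = 0"
  shows "up_cross f z"
proof -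
  obtain d1 where d1: "d1 > 0" "\<forall>h>0. h < d1 \<longrightarrow> f (z - h) < f z" using DERIV_pos_inc_left[OF d D] by blast
  obtain d2 where d2: "d2 > 0" "\<forall>h>0. h < d2 \<longrightarrow> f z < f (z + h)" using DERIV_pos_inc_right[OF d D] by blast
  show ?thesis unfolding up_cross_def
  proof (intro exI[of _ "min d1 d2"] conjI allI impI)
    show "0 < min d1 d2" using d1 d2 by simp
  next
    fix u assume u: "z - min d1 d2 < u \<and> u < z"
    then have "0 < z - u" "z - u < d1" using min.cobounded1[of d1 d2] by linarith+
    then have "f (z - (z - u)) < f z" using d1(2) by blast
    then show "f u < 0" using z by simp
  next
    fix u assume u: "z < u \<and> u < z + min d1 d2"
    then have "0 < u - z" "u - z < d2" using min.cobounded2[of d1 d2] by linarith+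
    then have "f z < f (z + (u - z))" using d2(2) by blast
    then show "f u > 0" using z by simp
  qed
qed

lemma down_up_neg: "down_cross (\<lambda>t. - f t) z = up_cross f z" "up_cross (\<lambda>t. - f t) z = down_cross f z"
  unfolding down_cross_def up_cross_def by auto

lemma not_down_up: "down_cross f z \<Longrightarrow> up_cross f z \<Longrightarrow> False"
proof -
  assume "down_cross f z" "up_cross f z"
  then obtain e1 e2 where e: "e1 > 0" "\<forall>u. z - e1 < u \<and> u < z \<longrightarrow> f u > 0" "e2 > 0" "\<forall>u. z - e2 < u \<and> u < z \<longrightarrow> f u < 0"
    unfolding down_cross_def up_cross_def by blast
  have "f (z - min e1 e2 / 2) > 0" "f (z - min e1 e2 / 2) < 0"
    using e(2)[rule_format, of "z - min e1 e2 / 2"] e(4)[rule_format, of "z - min e1 e2 / 2"] e(1,3) by auto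
  then show False by simp
qed

lemma Dom_open: "open (Dom s \<alpha> \<beta> c)"
proof -
  have "Dom s \<alpha> \<beta> c = (\<Inter>i\<in>{1..s}. {t. 0 < coefA \<alpha> \<beta> i * t + coefB \<alpha> \<beta> c i})"
    unfolding Dom_def by auto
  moreover have "open {t::real. 0 < coefA \<alpha> \<beta> i * t + coefB \<alpha> \<beta> c i}" for i
    by (rule open_Collect_less) (intro continuous_intros)+
  ultimately show ?thesis by auto
qed

lemma lin_pos_between:
  fixes A B x y z :: real
  assumes "0 < A * x + B" "0 < A * y + B" "x \<le> z" "z \<le> y"
  shows "0 < A * z + B"
proof (cases "A \<ge> 0")
  case True
  have "A * x \<le> A * z" using assms(3) True by (rule mult_left_mono)
  then show ?thesis using assms(1) by linarith
next
  case False
  then have "A * y \<le> A * z" using assms(4) by (simp add: mult_left_mono_neg)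
  then show ?thesis using assms(2) by linarith
qed

lemma Dom_conv: "x \<in> Dom s \<alpha> \<beta> c \<Longrightarrow> y \<in> Dom s \<alpha> \<beta> c \<Longrightarrow> x \<le> z \<Longrightarrow> z \<le> y \<Longrightarrow> z \<in> Dom s \<alpha> \<beta> c"
  unfolding Dom_def using lin_pos_between by blast

lemma cap_bound:
  assumes cap: "cap_pos s \<alpha> \<beta> = enat n" and k: "\<kappa> 1 > 0" "\<kappa> 2 > 0"
  shows "finite (pos_steady_states s \<alpha> \<beta> \<kappa> c) \<and> card (pos_steady_states s \<alpha> \<beta> \<kappa> c) \<le> n"
proof -
  have "ecard (pos_steady_states s \<alpha> \<beta> \<kappa> c) \<le> cap_pos s \<alpha> \<beta>"
    unfolding cap_pos_def by (rule Sup_upper) (use k in blast)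
  then have "ecard (pos_steady_states s \<alpha> \<beta> \<kappa> c) \<le> enat n" using cap by simp
  then show ?thesis unfolding ecard_def by (auto split: if_splits)
qed


locale L78 =
  fixes s r N :: nat and \<alpha> \<beta> :: "nat \<Rightarrow> nat \<Rightarrow> nat" and \<kappa>s cs :: "nat \<Rightarrow> real" and \<tau> :: nat
  assumes G: "two_reaction_network s \<alpha> \<beta>"
    and lab1: "\<beta> 1 1 \<noteq> \<alpha> 1 1"
    and cap: "cap_pos s \<alpha> \<beta> = enat (2 * N + 1)"
    and kpos1: "\<kappa>s 1 > 0" and kpos2: "\<kappa>s 2 > 0"
    and nss1: "finite (pos_steady_states s \<alpha> \<beta> \<kappa>s cs)"
    and nss2: "card (pos_steady_states s \<alpha> \<beta> \<kappa>s cs) = 2 * N + 1"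
    and nstab: "card {x \<in> pos_steady_states s \<alpha> \<beta> \<kappa>s cs. stable s \<alpha> \<beta> \<kappa>s x} = N + 1"
    and reps: "class_reps s \<alpha> \<beta> cs r"
    and lab2: "1 \<in> Hset s \<alpha> \<beta> cs r"
    and tau: "is_tau s \<alpha> \<beta> cs r \<tau>"
begin

abbreviation "A \<equiv> coefA \<alpha> \<beta>"
abbreviation "B \<equiv> coefB \<alpha> \<beta> cs"
abbreviation "a0 \<equiv> stoich \<alpha> \<beta> 1 1"
definition "lam = stoich \<alpha> \<beta> 1 2 / stoich \<alpha> \<beta> 1 1"
definition "R i = B i / A i" for i
definition "Sm k j = (\<Sum>i\<in>sp_class s \<alpha> \<beta> cs k. \<alpha> i j)" for k j
definition "L = - B \<tau> / A \<tau>"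

lemma s1: "1 \<le> s" using G unfolding two_reaction_network_def by simp
lemma a0: "a0 \<noteq> 0" using lab1 unfolding stoich_def by simp

lemma ex_x0: "\<exists>x0. x0 \<in> pos_steady_states s \<alpha> \<beta> \<kappa>s cs"
proof -
  have "pos_steady_states s \<alpha> \<beta> \<kappa>s cs \<noteq> {}"
  proof
    assume "pos_steady_states s \<alpha> \<beta> \<kappa>s cs = {}"
    then show False using nss2 by simp
  qed
  then show ?thesis by blast
qed

lemma prop_lam: "\<forall>i\<in>{1..s}. stoich \<alpha> \<beta> i 2 = lam * stoich \<alpha> \<beta> i 1" and lam_neg: "lam < 0"
  using prop_lemma[OF a0 s1 kpos1 kpos2] ex_x0 unfolding lam_def by blast+

definition "g t = Gf s \<alpha> \<kappa>s lam (Xc s \<alpha> \<beta> cs t)" for t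
definition "Z = {t \<in> Dom s \<alpha> \<beta> cs. g t = 0}"

lemma pss_Z: "pos_steady_states s \<alpha> \<beta> \<kappa>s cs = Xc s \<alpha> \<beta> cs ` Z"
  unfolding Z_def g_def by (rule pss_char[OF a0 s1 prop_lam])

lemma inj_X: "inj (Xc s \<alpha> \<beta> c)" by (rule Xc_inj[OF s1])

lemma inj_XZ: "inj_on (Xc s \<alpha> \<beta> c) W" using inj_X by (rule inj_on_subset) simp

lemma Z_fin: "finite Z" and Z_card: "card Z = 2 * N + 1"
proof -
  show "finite Z" using nss1 unfolding pss_Z finite_image_iff[OF inj_XZ] .
  show "card Z = 2 * N + 1" using nss2 unfolding pss_Z card_image[OF inj_XZ] .
qed

lemma ex_t0: "\<exists>t0. t0 \<in> Dom s \<alpha> \<beta> cs"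
  using ex_x0 unfolding pss_Z Z_def by auto

definition "t0 = (SOME t. t \<in> Dom s \<alpha> \<beta> cs)"
lemma t0: "t0 \<in> Dom s \<alpha> \<beta> cs" using ex_t0 unfolding t0_def by (rule someI_ex)
lemma t0pos: "i \<in> {1..s} \<Longrightarrow> 0 < A i * t0 + B i" using t0 unfolding Dom_def by blast

lemma B_AR: "A i \<noteq> 0 \<Longrightarrow> B i = A i * R i" unfolding R_def by simp

lemma F1: assumes "i \<in> {1..s}" "k \<in> {1..s}" "A i \<noteq> 0" "A k \<noteq> 0" "R i = R k" "A i > 0" shows "A k > 0"
proof -
  have "0 < A i * (t0 + R i)" using t0pos[OF assms(1)] B_AR[OF assms(3)] by (simp add: algebra_simps)
  then have p: "t0 + R i > 0" using assms(6) by (simp add: zero_less_mult_iff)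
  have "0 < A k * (t0 + R k)" using t0pos[OF assms(2)] B_AR[OF assms(4)] by (simp add: algebra_simps)
  then show ?thesis using p assms(5) by (simp add: zero_less_mult_iff)
qed

lemma sp_formula: "A k \<noteq> 0 \<Longrightarrow> sp_class s \<alpha> \<beta> cs k = {i \<in> {1..s}. A i \<noteq> 0 \<and> R i = R k}"
  unfolding sp_class_def R_def by simp

lemma F2: assumes "A k \<noteq> 0" "i \<in> sp_class s \<alpha> \<beta> cs k"
  shows "i \<in> {1..s}" "A i \<noteq> 0" "R i = R k" "sp_class s \<alpha> \<beta> cs i = sp_class s \<alpha> \<beta> cs k"
proof -
  show "i \<in> {1..s}" "A i \<noteq> 0" "R i = R k" using assms sp_formula by auto
  then show "sp_class s \<alpha> \<beta> cs i = sp_class s \<alpha> \<beta> cs k" using sp_formula assms(1) by auto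
qed

lemma gam_diff: "gam s \<alpha> \<beta> cs k 1 - gam s \<alpha> \<beta> cs k 2 = int (Sm k 1) - int (Sm k 2)"
  unfolding gam_def Sm_def by simp

lemma H_Sm: assumes "k \<in> Hset s \<alpha> \<beta> cs r" shows "Sm k 1 \<noteq> Sm k 2"
proof -
  have "gam s \<alpha> \<beta> cs k 1 \<noteq> gam s \<alpha> \<beta> cs k 2" using assms unfolding Hset_def by blast
  then have "int (Sm k 1) - int (Sm k 2) \<noteq> 0" using gam_diff[of k] by linarith
  then show ?thesis by simp
qed

definition "Ns = {i \<in> {1..s}. A i > 0 \<and> Sm i 1 = Sm i 2}"

lemma one_notin_N: "1 \<notin> Ns" using H_Sm[OF lab2] unfolding Ns_def by auto

lemma tauH: "\<tau> \<in> Hset s \<alpha> \<beta> cs r" and Atau: "A \<tau> > 0" and Ine: "Iset s \<alpha> \<beta> cs r \<noteq> {}"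
  and Linf: "L = Inf (Iset s \<alpha> \<beta> cs r)"
  using tau unfolding is_tau_def L_def by auto

lemma rs: "r \<le> s" using reps unfolding class_reps_def by simp

lemma tauS: "\<tau> \<in> {1..s}" using tauH rs unfolding Hset_def by auto

lemma L_R: "L = - R \<tau>" unfolding L_def R_def by simp

lemma F3: assumes i: "i \<in> {1..s}" and Ai: "A i > 0" and iN: "i \<notin> Ns" shows "- R i \<le> L"
proof -
  have ne: "Sm i 1 \<noteq> Sm i 2" using i Ai iN unfolding Ns_def by auto
  obtain k where k: "k \<in> {1..r}" "i \<in> sp_class s \<alpha> \<beta> cs k" using reps i unfolding class_reps_def by blast
  have kS: "k \<in> {1..s}" using k rs by auto
  have Ak: "A k \<noteq> 0"
  proof
    assume "A k = 0"
    then have "A i = 0" using k(2) unfolding sp_class_def by auto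
    then show False using Ai by simp
  qed
  have Rik: "R i = R k" and spik: "sp_class s \<alpha> \<beta> cs i = sp_class s \<alpha> \<beta> cs k" using F2[OF Ak k(2)] by auto
  have "Sm k 1 \<noteq> Sm k 2" using ne spik unfolding Sm_def by simp
  then have "int (Sm k 1) \<noteq> int (Sm k 2)" by simp
  then have gne: "gam s \<alpha> \<beta> cs k 1 \<noteq> gam s \<alpha> \<beta> cs k 2" using gam_diff[of k] by linarith
  have kJ: "k \<in> {1..r} \<inter> Jset s \<alpha> \<beta>" unfolding Jset_def using k(1) kS Ak by blast
  have kH: "k \<in> Hset s \<alpha> \<beta> cs r" unfolding Hset_def using kJ gne by blast
  have Akp: "A k > 0" using F1[OF i kS _ Ak Rik Ai] Ai by simp
  have "\<forall>x\<in>Iset s \<alpha> \<beta> cs r. - R i \<le> x"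
  proof
    fix x assume "x \<in> Iset s \<alpha> \<beta> cs r"
    then have "x \<in> Ival \<alpha> \<beta> cs k" using kH unfolding Iset_def by blast
    then show "- R i \<le> x" using Akp Rik unfolding Ival_def R_def by auto
  qed
  then have "- R i \<le> Inf (Iset s \<alpha> \<beta> cs r)" using Ine by (meson cInf_greatest)
  then show ?thesis using Linf by simp
qed

definition "T = sp_class s \<alpha> \<beta> cs \<tau>"

lemma F4: assumes "i \<in> T" shows "i \<in> {1..s}" "A i > 0" "B i = - A i * L" "i \<notin> Ns"
proof -
  have At: "A \<tau> \<noteq> 0" using Atau by simp
  note f = F2[OF At assms[unfolded T_def]]
  show "i \<in> {1..s}" by (rule f(1))
  show Ai: "A i > 0" using F1[OF tauS f(1) At f(2) f(3)[symmetric] Atau] .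
  show "B i = - A i * L" using B_AR[OF f(2)] f(3) L_R by simp
  show "i \<notin> Ns" using f(4) H_Sm[OF tauH] unfolding Ns_def Sm_def by auto
qed

lemma F5: assumes i: "i \<in> {1..s}" and Ai: "A i > 0" and iT: "i \<notin> T" and iN: "i \<notin> Ns" shows "- R i < L"
proof -
  have "- R i \<noteq> L"
  proof
    assume "- R i = L"
    then have "R i = R \<tau>" using L_R by simp
    then have "i \<in> T" unfolding T_def using sp_formula[of \<tau>] Atau i Ai by auto
    then show False using iT by simp
  qed
  then show ?thesis using F3[OF i Ai iN] by simp
qed

lemma F8: "t \<in> Dom s \<alpha> \<beta> cs \<Longrightarrow> L < t"
proof -
  assume "t \<in> Dom s \<alpha> \<beta> cs"
  then have "0 < A \<tau> * t + B \<tau>" using tauS unfolding Dom_def by blast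
  then show "L < t" unfolding L_def using Atau by (simp add: field_simps)
qed

lemma F6: assumes i: "i \<in> {1..s}" and Ai: "A i < 0" shows "0 < A i * L + B i"
proof -
  have "L < t0" using F8[OF t0] .
  then have "A i * t0 < A i * L" using Ai by simp
  then show ?thesis using t0pos[OF i] by linarith
qed

lemma F7: assumes i: "i \<in> {1..s}" and Ai: "A i = 0" and d: "d \<in> Dom s \<alpha> \<beta> cs" shows "0 < B i"
proof -
  have "0 < A i * d + B i" using d i unfolding Dom_def by blast
  then show ?thesis using Ai by simp
qed

end


context L78 begin

definition "Lnew = L - 1"
definition "cn j = (if Suc j \<in> Ns then a0 * A (Suc j) * Lnew else cs j)" for j
abbreviation "Bn \<equiv> coefB \<alpha> \<beta> cn"

lemma Bn: assumes i: "i \<in> {1..s}" shows "Bn i = (if i \<in> Ns then - (A i * Lnew) else B i)"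
proof (cases "i = 1")
  case True then show ?thesis using one_notin_N by simp
next
  case False
  then have si: "Suc (i - 1) = i" using i by auto
  show ?thesis using False a0 unfolding coefB_def cn_def si by simp
qed

definition "gn t = Gf s \<alpha> \<kappa>s lam (Xc s \<alpha> \<beta> cn t)" for t
definition "Zn = {t \<in> Dom s \<alpha> \<beta> cn. gn t = 0}"

lemma Zn_fin: "finite Zn" and Zn_card: "card Zn \<le> 2 * N + 1"
proof -
  have e: "pos_steady_states s \<alpha> \<beta> \<kappa>s cn = Xc s \<alpha> \<beta> cn ` Zn"
    unfolding Zn_def gn_def by (rule pss_char[OF a0 s1 prop_lam])
  have cb: "finite (pos_steady_states s \<alpha> \<beta> \<kappa>s cn) \<and> card (pos_steady_states s \<alpha> \<beta> \<kappa>s cn) \<le> 2 * N + 1"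
    by (rule cap_bound[OF cap kpos1 kpos2])
  show "finite Zn" using cb unfolding e finite_image_iff[OF inj_XZ] by simp
  show "card Zn \<le> 2 * N + 1" using cb unfolding e card_image[OF inj_XZ] by simp
qed

lemma X_eq: "i \<in> {1..s} \<Longrightarrow> Xc s \<alpha> \<beta> cs t i = A i * t + B i" unfolding Xc_def by simp
lemma Xn_eq: "i \<in> {1..s} \<Longrightarrow> Xc s \<alpha> \<beta> cn t i = (if i \<in> Ns then A i * (t - Lnew) else A i * t + B i)"
  unfolding Xc_def using Bn by (simp add: algebra_simps)

lemma Ns_S: "Ns \<subseteq> {1..s}" unfolding Ns_def by auto
lemma Ns_pos: "i \<in> Ns \<Longrightarrow> A i > 0" unfolding Ns_def by auto

lemma Ns_class: assumes i0: "i0 \<in> Ns" shows "{x \<in> Ns. R x = R i0} = sp_class s \<alpha> \<beta> cs i0"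
proof (intro set_eqI iffI)
  have A0: "A i0 \<noteq> 0" using Ns_pos[OF i0] by simp
  fix x
  { assume "x \<in> {x \<in> Ns. R x = R i0}"
    then show "x \<in> sp_class s \<alpha> \<beta> cs i0" using sp_formula[OF A0] Ns_S Ns_pos by force }
  { assume x: "x \<in> sp_class s \<alpha> \<beta> cs i0"
    note f = F2[OF A0 x]
    have "A x > 0" using F1[OF _ f(1) A0 f(2) f(3)[symmetric] Ns_pos[OF i0]] i0 Ns_S by auto
    moreover have "Sm x 1 = Sm x 2" using f(4) i0 unfolding Ns_def Sm_def by simp
    ultimately show "x \<in> {x \<in> Ns. R x = R i0}" using f unfolding Ns_def by simp }
qed

lemma W_eq:
  fixes \<phi> :: "real \<Rightarrow> real"
  shows "(\<Prod>i\<in>Ns. \<phi> (R i) ^ \<alpha> i 1) = (\<Prod>i\<in>Ns. \<phi> (R i) ^ \<alpha> i 2)"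
proof -
  have finN: "finite Ns" using Ns_S finite_subset by blast
  have grp: "(\<Prod>i\<in>Ns. \<phi> (R i) ^ \<alpha> i j) = (\<Prod>y\<in>R ` Ns. \<phi> y ^ (\<Sum>i\<in>{x \<in> Ns. R x = y}. \<alpha> i j))" for j
  proof -
    have "(\<Prod>i\<in>Ns. \<phi> (R i) ^ \<alpha> i j) = (\<Prod>y\<in>R ` Ns. \<Prod>i\<in>{x \<in> Ns. R x = y}. \<phi> (R i) ^ \<alpha> i j)"
      by (rule prod.group[symmetric]) (use finN in auto)
    also have "\<dots> = (\<Prod>y\<in>R ` Ns. \<phi> y ^ (\<Sum>i\<in>{x \<in> Ns. R x = y}. \<alpha> i j))"
    proof (rule prod.cong[OF refl])
      fix y assume "y \<in> R ` Ns"
      have "(\<Prod>i\<in>{x \<in> Ns. R x = y}. \<phi> (R i) ^ \<alpha> i j) = (\<Prod>i\<in>{x \<in> Ns. R x = y}. \<phi> y ^ \<alpha> i j)"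
        by (rule prod.cong) auto
      also have "\<dots> = \<phi> y ^ (\<Sum>i\<in>{x \<in> Ns. R x = y}. \<alpha> i j)" by (rule power_sum[symmetric])
      finally show "(\<Prod>i\<in>{x \<in> Ns. R x = y}. \<phi> (R i) ^ \<alpha> i j) = \<phi> y ^ (\<Sum>i\<in>{x \<in> Ns. R x = y}. \<alpha> i j)" .
    qed
    finally show ?thesis .
  qed
  have "(\<Prod>y\<in>R ` Ns. \<phi> y ^ (\<Sum>i\<in>{x \<in> Ns. R x = y}. \<alpha> i 1)) = (\<Prod>y\<in>R ` Ns. \<phi> y ^ (\<Sum>i\<in>{x \<in> Ns. R x = y}. \<alpha> i 2))"
  proof (rule prod.cong[OF refl])
    fix y assume "y \<in> R ` Ns"
    then obtain i0 where i0: "i0 \<in> Ns" "y = R i0" by auto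
    have "(\<Sum>i\<in>{x \<in> Ns. R x = y}. \<alpha> i 1) = Sm i0 1" unfolding i0(2) Ns_class[OF i0(1)] Sm_def ..
    also have "\<dots> = Sm i0 2" using i0(1) unfolding Ns_def by simp
    also have "\<dots> = (\<Sum>i\<in>{x \<in> Ns. R x = y}. \<alpha> i 2)" unfolding i0(2) Ns_class[OF i0(1)] Sm_def ..
    finally show "\<phi> y ^ (\<Sum>i\<in>{x \<in> Ns. R x = y}. \<alpha> i 1) = \<phi> y ^ (\<Sum>i\<in>{x \<in> Ns. R x = y}. \<alpha> i 2)" by simp
  qed
  then show ?thesis unfolding grp .
qed

lemma L_Lnew: "Lnew < L" unfolding Lnew_def by simp

lemma G1: assumes t: "t \<in> Dom s \<alpha> \<beta> cs"
  shows "t \<in> Dom s \<alpha> \<beta> cn" and "\<exists>\<rho>>0. g t = \<rho> * gn t"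
proof -
  have tL: "L < t" using F8[OF t] .
  have tpos: "\<And>i. i \<in> {1..s} \<Longrightarrow> 0 < A i * t + B i" using t unfolding Dom_def by blast
  show "t \<in> Dom s \<alpha> \<beta> cn" unfolding Dom_def
  proof (intro CollectI ballI)
    fix i assume i: "i \<in> {1..s}"
    show "0 < A i * t + Bn i"
    proof (cases "i \<in> Ns")
      case True
      then have "A i * t + Bn i = A i * (t - Lnew)" using Bn[OF i] by (simp add: algebra_simps)
      moreover have "A i * (t - Lnew) > 0" using Ns_pos[OF True] tL L_Lnew by simp
      ultimately show ?thesis by simp
    next
      case False then show ?thesis using Bn[OF i] tpos[OF i] by simp
    qed
  qed
  define u where "u i = (t + R i) / (t - Lnew)" for i
  define Xo where "Xo = Xc s \<alpha> \<beta> cs t"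
  define Xn where "Xn = Xc s \<alpha> \<beta> cn t"
  have tLn: "t - Lnew > 0" using tL L_Lnew by simp
  have uN: "Xo i = u i * Xn i" if i: "i \<in> Ns" for i
  proof -
    have iS: "i \<in> {1..s}" using i Ns_S by auto
    have Ai: "A i \<noteq> 0" using Ns_pos[OF i] by simp
    have e1: "Xo i = A i * (t + R i)" unfolding Xo_def X_eq[OF iS] using B_AR[OF Ai] by (simp add: algebra_simps)
    have e2: "Xn i = A i * (t - Lnew)" unfolding Xn_def Xn_eq[OF iS] using i by simp
    have "u i * (A i * (t - Lnew)) = A i * (t + R i)" unfolding u_def using tLn by (simp add: field_simps)
    then show ?thesis unfolding e1 e2 by (simp only: mult.commute)
  qed
  have uO: "Xo i = Xn i" if i: "i \<in> {1..s} - Ns" for i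
    using i unfolding Xo_def Xn_def X_eq Xn_eq by (simp add: X_eq Xn_eq)
  have upos: "u i > 0" if i: "i \<in> Ns" for i
  proof -
    have iS: "i \<in> {1..s}" using i Ns_S by auto
    have Ai: "A i > 0" using Ns_pos[OF i] .
    have "0 < A i * (t + R i)" using tpos[OF iS] B_AR[of i] Ai by (simp add: algebra_simps)
    then have "t + R i > 0" using Ai by (simp add: zero_less_mult_iff)
    then show ?thesis unfolding u_def using tLn by simp
  qed
  define W where "W j = (\<Prod>i\<in>Ns. u i ^ \<alpha> i j)" for j
  have finS: "finite {1..s}" by simp
  have mvW: "mv s \<alpha> j Xo = W j * mv s \<alpha> j Xn" for j
  proof -
    have "mv s \<alpha> j Xo = (\<Prod>i\<in>{1..s} - Ns. Xo i ^ \<alpha> i j) * (\<Prod>i\<in>Ns. Xo i ^ \<alpha> i j)"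
      unfolding mv_def by (rule prod.subset_diff[OF Ns_S finS])
    also have "(\<Prod>i\<in>{1..s} - Ns. Xo i ^ \<alpha> i j) = (\<Prod>i\<in>{1..s} - Ns. Xn i ^ \<alpha> i j)"
      by (rule prod.cong) (use uO in auto)
    also have "(\<Prod>i\<in>Ns. Xo i ^ \<alpha> i j) = (\<Prod>i\<in>Ns. u i ^ \<alpha> i j * Xn i ^ \<alpha> i j)"
      by (rule prod.cong) (use uN in \<open>auto simp: power_mult_distrib\<close>)
    also have "\<dots> = W j * (\<Prod>i\<in>Ns. Xn i ^ \<alpha> i j)" unfolding W_def by (rule prod.distrib)
    also have "mv s \<alpha> j Xn = (\<Prod>i\<in>{1..s} - Ns. Xn i ^ \<alpha> i j) * (\<Prod>i\<in>Ns. Xn i ^ \<alpha> i j)"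
      unfolding mv_def by (rule prod.subset_diff[OF Ns_S finS])
    ultimately show ?thesis by simp
  qed
  have W12: "W 1 = W 2"
  proof -
    define \<phi> where "\<phi> y = (t + y) / (t - Lnew)" for y
    have "u = (\<lambda>i. \<phi> (R i))" unfolding u_def \<phi>_def by auto
    then show ?thesis unfolding W_def using W_eq[of \<phi>] by simp
  qed
  have Wpos: "W 1 > 0" unfolding W_def by (rule prod_pos) (use upos in auto)
  have "g t = W 1 * gn t"
    unfolding g_def gn_def Gf_def Xo_def[symmetric] Xn_def[symmetric] mvW W12[symmetric]
    by (simp add: algebra_simps)
  then show "\<exists>\<rho>>0. g t = \<rho> * gn t" using Wpos by blast
qed

lemma G2: assumes d: "d \<in> Dom s \<alpha> \<beta> cs" and t: "L < t" "t \<le> d" shows "t \<in> Dom s \<alpha> \<beta> cn"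
  unfolding Dom_def
proof (intro CollectI ballI)
  fix i assume i: "i \<in> {1..s}"
  have dpos: "0 < A i * d + B i" using d i unfolding Dom_def by blast
  show "0 < A i * t + Bn i"
  proof (cases "i \<in> Ns")
    case True
    then have "A i * t + Bn i = A i * (t - Lnew)" using Bn[OF i] by (simp add: algebra_simps)
    moreover have "A i * (t - Lnew) > 0" using Ns_pos[OF True] t L_Lnew by simp
    ultimately show ?thesis by simp
  next
    case False
    then have e: "Bn i = B i" using Bn[OF i] by simp
    consider "A i > 0" | "A i < 0" | "A i = 0" by linarith
    then show ?thesis
    proof cases
      case 1
      have "- R i \<le> L" using F3[OF i 1 False] .
      then have "0 < A i * (t + R i)" using 1 t by simp
      then show ?thesis unfolding e using B_AR[of i] 1 by (simp add: algebra_simps)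
    next
      case 2
      have "A i * d \<le> A i * t" using 2 t(2) by (simp add: mult_left_mono_neg)
      then show ?thesis unfolding e using dpos by linarith
    next
      case 3 then show ?thesis unfolding e using dpos by simp
    qed
  qed
qed

lemma Z_Zn: "Zn = Z"
proof -
  have sub: "Z \<subseteq> Zn"
  proof
    fix t assume "t \<in> Z"
    then have t: "t \<in> Dom s \<alpha> \<beta> cs" "g t = 0" unfolding Z_def by auto
    obtain \<rho> where "\<rho> > 0" "g t = \<rho> * gn t" using G1(2)[OF t(1)] by blast
    then have "gn t = 0" using t(2) by simp
    then show "t \<in> Zn" unfolding Zn_def using G1(1)[OF t(1)] by simp
  qed
  have "card Zn \<le> card Z" using Zn_card Z_card by simp
  moreover have "card Z \<le> card Zn" by (rule card_mono[OF Zn_fin sub])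
  ultimately have "card Z = card Zn" by (rule antisym[rotated])
  then have "Z = Zn" by (rule card_subset_eq[OF Zn_fin sub])
  then show ?thesis by (rule sym)
qed

end


context L78 begin

definition "S1 = Sm \<tau> 1"
definition "S2 = Sm \<tau> 2"
definition "Cc j = (\<Prod>i\<in>T. A i ^ \<alpha> i j)" for j
definition "Q j t = (\<Prod>i\<in>{1..s} - T. (A i * t + Bn i) ^ \<alpha> i j)" for j t

lemma T_S: "T \<subseteq> {1..s}" using F4(1) by blast

lemma mv_form: "mv s \<alpha> j (Xc s \<alpha> \<beta> cn t) = Cc j * (t - L) ^ Sm \<tau> j * Q j t"
proof -
  define Xn where "Xn = Xc s \<alpha> \<beta> cn t"
  have finS: "finite {1..s}" by simp
  have "mv s \<alpha> j Xn = (\<Prod>i\<in>{1..s} - T. Xn i ^ \<alpha> i j) * (\<Prod>i\<in>T. Xn i ^ \<alpha> i j)"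
    unfolding mv_def by (rule prod.subset_diff[OF T_S finS])
  also have "(\<Prod>i\<in>{1..s} - T. Xn i ^ \<alpha> i j) = Q j t"
    unfolding Q_def Xn_def by (rule prod.cong) (auto simp: Xc_def)
  also have "(\<Prod>i\<in>T. Xn i ^ \<alpha> i j) = (\<Prod>i\<in>T. A i ^ \<alpha> i j * (t - L) ^ \<alpha> i j)"
  proof (rule prod.cong[OF refl])
    fix i assume i: "i \<in> T"
    have "Xn i = A i * t + B i" unfolding Xn_def Xn_eq[OF F4(1)[OF i]] using F4(4)[OF i] by simp
    also have "\<dots> = A i * (t - L)" using F4(3)[OF i] by (simp add: algebra_simps)
    finally show "Xn i ^ \<alpha> i j = A i ^ \<alpha> i j * (t - L) ^ \<alpha> i j" by (simp add: power_mult_distrib)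
  qed
  also have "\<dots> = Cc j * (\<Prod>i\<in>T. (t - L) ^ \<alpha> i j)" unfolding Cc_def by (rule prod.distrib)
  also have "(\<Prod>i\<in>T. (t - L) ^ \<alpha> i j) = (t - L) ^ Sm \<tau> j" unfolding Sm_def T_def by (rule power_sum[symmetric])
  finally show ?thesis unfolding Xn_def by simp
qed

lemma gn_form: "gn t = \<kappa>s 1 * (Cc 1 * (t - L) ^ S1 * Q 1 t) + lam * \<kappa>s 2 * (Cc 2 * (t - L) ^ S2 * Q 2 t)"
  unfolding gn_def Gf_def mv_form S1_def S2_def ..

lemma Q_cont: "isCont (Q j) x"
  unfolding Q_def by (intro continuous_intros)

lemma Q_pos: "Q j L > 0"
  unfolding Q_def
proof (rule prod_pos)
  fix i assume i: "i \<in> {1..s} - T"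
  then have iS: "i \<in> {1..s}" and iT: "i \<notin> T" by auto
  have "0 < A i * L + Bn i"
  proof (cases "i \<in> Ns")
    case True
    then have "A i * L + Bn i = A i * (L - Lnew)" using Bn[OF iS] by (simp add: algebra_simps)
    moreover have "A i * (L - Lnew) > 0" using Ns_pos[OF True] L_Lnew by simp
    ultimately show ?thesis by simp
  next
    case False
    then have e: "Bn i = B i" using Bn[OF iS] by simp
    consider "A i > 0" | "A i < 0" | "A i = 0" by linarith
    then show ?thesis
    proof cases
      case 1
      have "- R i < L" using F5[OF iS 1 iT False] .
      then have "0 < A i * (L + R i)" using 1 by simp
      then show ?thesis unfolding e using B_AR[of i] 1 by (simp add: algebra_simps)
    next
      case 2 then show ?thesis unfolding e using F6[OF iS 2] by simp
    next
      case 3 then show ?thesis unfolding e using F7[OF iS 3 t0] by simp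
    qed
  qed
  then show "0 < (A i * L + Bn i) ^ \<alpha> i j" by simp
qed

lemma Cc_pos: "Cc j > 0"
  unfolding Cc_def by (rule prod_pos) (use F4(2) in simp)

lemma S12: "S1 \<noteq> S2" using H_Sm[OF tauH] unfolding S1_def S2_def .

lemma near: "\<exists>\<delta>>0. \<forall>t. L < t \<and> t < L + \<delta> \<longrightarrow> (S1 < S2 \<longrightarrow> gn t > 0) \<and> (S2 < S1 \<longrightarrow> gn t < 0)"
proof (cases "S1 < S2")
  case True
  define H where "H t = \<kappa>s 1 * Cc 1 * Q 1 t + lam * \<kappa>s 2 * Cc 2 * (t - L) ^ (S2 - S1) * Q 2 t" for t
  have cH: "isCont H L" unfolding H_def by (intro continuous_intros Q_cont)
  have "H L = \<kappa>s 1 * Cc 1 * Q 1 L" unfolding H_def using True by simp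
  then have HL: "H L > 0" using kpos1 Cc_pos Q_pos by simp
  have "eventually (\<lambda>t. 0 < H t) (at L)" using order_tendstoD(1)[OF isContD[OF cH] HL] .
  then obtain \<delta> where d: "\<delta> > 0" "\<forall>t. t \<noteq> L \<and> dist t L < \<delta> \<longrightarrow> 0 < H t"
    unfolding eventually_at by auto
  show ?thesis
  proof (intro exI[of _ \<delta>] conjI allI impI)
    show "\<delta> > 0" by (rule d(1))
  next
    fix t assume t: "L < t \<and> t < L + \<delta>" and "S1 < S2"
    have "H t > 0" using d(2) t by (auto simp: dist_real_def)
    moreover have "gn t = (t - L) ^ S1 * H t"
    proof -
      have "(t - L) ^ S2 = (t - L) ^ S1 * (t - L) ^ (S2 - S1)"
        using True by (simp add: power_add[symmetric])
      then show ?thesis unfolding gn_form H_def by (simp add: algebra_simps)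
    qed
    moreover have "(t - L) ^ S1 > 0" using t by simp
    ultimately show "gn t > 0" by simp
  next
    fix t assume "S2 < S1" then show "gn t < 0" using True by simp
  qed
next
  case False
  then have F: "S2 < S1" using S12 by simp
  define H where "H t = \<kappa>s 1 * Cc 1 * (t - L) ^ (S1 - S2) * Q 1 t + lam * \<kappa>s 2 * Cc 2 * Q 2 t" for t
  have cH: "isCont H L" unfolding H_def by (intro continuous_intros Q_cont)
  have "H L = lam * \<kappa>s 2 * Cc 2 * Q 2 L" unfolding H_def using F by simp
  moreover have "lam * \<kappa>s 2 * Cc 2 * Q 2 L < 0"
    using lam_neg kpos2 Cc_pos[of 2] Q_pos[of 2] by (simp add: mult_neg_pos)
  ultimately have HL: "H L < 0" by simp
  have "eventually (\<lambda>t. H t < 0) (at L)" using order_tendstoD(2)[OF isContD[OF cH] HL] .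
  then obtain \<delta> where d: "\<delta> > 0" "\<forall>t. t \<noteq> L \<and> dist t L < \<delta> \<longrightarrow> H t < 0"
    unfolding eventually_at by auto
  show ?thesis
  proof (intro exI[of _ \<delta>] conjI allI impI)
    show "\<delta> > 0" by (rule d(1))
  next
    fix t assume "S1 < S2" then show "gn t > 0" using False by simp
  next
    fix t assume t: "L < t \<and> t < L + \<delta>" and "S2 < S1"
    have "H t < 0" using d(2) t by (auto simp: dist_real_def)
    moreover have "gn t = (t - L) ^ S2 * H t"
    proof -
      have "(t - L) ^ S1 = (t - L) ^ S2 * (t - L) ^ (S1 - S2)"
        using F by (simp add: power_add[symmetric])
      then show ?thesis unfolding gn_form H_def by (simp add: algebra_simps)
    qed
    moreover have "(t - L) ^ S2 > 0" using t by simp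
    ultimately show "gn t < 0" by (simp add: mult_pos_neg)
  qed
qed

lemma g_fun: "g = (\<lambda>t. Gf s \<alpha> \<kappa>s lam (Xc s \<alpha> \<beta> cs t))" unfolding g_def ..
lemma gn_fun: "gn = (\<lambda>t. Gf s \<alpha> \<kappa>s lam (Xc s \<alpha> \<beta> cn t))" unfolding gn_def ..

lemma g_der: "(g has_real_derivative gd s \<alpha> \<beta> \<kappa>s lam cs t) (at t)"
  unfolding g_fun by (rule g_deriv)

lemma g_cont: "\<forall>x. isCont g x" using DERIV_isCont[OF g_der] by blast
lemma gn_cont: "\<forall>x. isCont gn x" unfolding gn_fun using DERIV_isCont[OF g_deriv] by blast

lemma start: assumes p: "p \<in> Dom s \<alpha> \<beta> cs" and pz: "\<And>z. z \<in> Dom s \<alpha> \<beta> cs \<Longrightarrow> g z = 0 \<Longrightarrow> p < z"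
  shows "(S1 < S2 \<longrightarrow> g p > 0) \<and> (S2 < S1 \<longrightarrow> g p < 0)"
proof -
  obtain \<delta> where d: "\<delta> > 0" "\<forall>t. L < t \<and> t < L + \<delta> \<longrightarrow> (S1 < S2 \<longrightarrow> gn t > 0) \<and> (S2 < S1 \<longrightarrow> gn t < 0)"
    using near by blast
  define t1 where "t1 = min p (L + \<delta>/2)"
  have pL: "L < p" using F8[OF p] .
  have t1: "L < t1" "t1 \<le> p" "t1 < L + \<delta>" unfolding t1_def using pL d(1) by auto
  have nz: "\<forall>x. t1 \<le> x \<and> x \<le> p \<longrightarrow> gn x \<noteq> 0"
  proof (intro allI impI)
    fix x assume x: "t1 \<le> x \<and> x \<le> p"
    have xD: "x \<in> Dom s \<alpha> \<beta> cn" using G2[OF p] t1 x by auto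
    show "gn x \<noteq> 0"
    proof
      assume "gn x = 0"
      then have "x \<in> Zn" unfolding Zn_def using xD by simp
      then have "x \<in> Z" using Z_Zn by simp
      then have "p < x" using pz unfolding Z_def by auto
      then show False using x by simp
    qed
  qed
  have sc: "(gn t1 > 0) = (gn p > 0)" by (rule sign_const[OF gn_cont t1(2) nz])
  have gnp: "gn p \<noteq> 0" using nz t1(2) by auto
  have gnt1: "gn t1 \<noteq> 0" using nz t1(2) by auto
  obtain \<rho> where r: "\<rho> > 0" "g p = \<rho> * gn p" using G1(2)[OF p] by blast
  have s1: "S1 < S2 \<longrightarrow> gn t1 > 0" and s2: "S2 < S1 \<longrightarrow> gn t1 < 0" using d(2) t1 by auto
  show ?thesis
  proof (intro conjI impI)
    assume "S1 < S2"
    then have "gn p > 0" using s1 sc by simp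
    then show "g p > 0" using r by simp
  next
    assume "S2 < S1"
    then have "\<not> gn p > 0" using s2 sc by simp
    then have "gn p < 0" using gnp by simp
    then show "g p < 0" using r by (simp add: mult_pos_neg)
  qed
qed

lemma main_L: "(gam s \<alpha> \<beta> cs \<tau> 1 - gam s \<alpha> \<beta> cs \<tau> 2) * (int (\<beta> \<tau> 1) - int (\<alpha> \<tau> 1)) < 0"
proof -
  define U where "U = Dom s \<alpha> \<beta> cs"
  have ZU: "{z \<in> U. g z = 0} = Z" unfolding U_def Z_def ..
  have ZUn: "{z \<in> U. - g z = 0} = Z" unfolding U_def Z_def by simp
  define Dn where "Dn = {z \<in> U. g z = 0 \<and> down_cross g z}"
  define Up where "Up = {z \<in> U. g z = 0 \<and> up_cross g z}"
  define ZS where "ZS = {t \<in> Z. stable s \<alpha> \<beta> \<kappa>s (Xc s \<alpha> \<beta> cs t)}"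
  have stabeq: "{x \<in> pos_steady_states s \<alpha> \<beta> \<kappa>s cs. stable s \<alpha> \<beta> \<kappa>s x} = Xc s \<alpha> \<beta> cs ` ZS"
    unfolding pss_Z ZS_def by auto
  have cZS: "card ZS = N + 1" using nstab unfolding stabeq card_image[OF inj_XZ] .
  have ZSZ: "ZS \<subseteq> Z" unfolding ZS_def by auto
  have finDn: "finite Dn" and finUp: "finite Up"
    unfolding Dn_def Up_def by (rule finite_subset[OF _ Z_fin], auto simp: Z_def U_def)+
  have DnZ: "Dn \<subseteq> Z" and UpZ: "Up \<subseteq> Z" unfolding Dn_def Up_def Z_def U_def by auto
  have disj: "Dn \<inter> Up = {}" unfolding Dn_def Up_def using not_down_up by blast
  have "card Dn + card Up = card (Dn \<union> Up)" using card_Un_disjoint[OF finDn finUp disj] by simp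
  also have "\<dots> \<le> card Z" by (rule card_mono[OF Z_fin]) (use DnZ UpZ in auto)
  finally have sumc: "card Dn + card Up \<le> 2 * N + 1" using Z_card by simp
  have ZSprop: "stoich \<alpha> \<beta> 1 1 * gd s \<alpha> \<beta> \<kappa>s lam cs t < 0" "g t = 0" "t \<in> U" if t: "t \<in> ZS" for t
  proof -
    show "stoich \<alpha> \<beta> 1 1 * gd s \<alpha> \<beta> \<kappa>s lam cs t < 0"
      using t unfolding ZS_def by (intro stable_sign[OF a0 s1 prop_lam]) auto
    show "g t = 0" "t \<in> U" using t unfolding ZS_def Z_def U_def by auto
  qed
  have cc: "\<forall>x. isCont (\<lambda>t. - g t) x" using g_cont by (auto intro: continuous_intros)
  have opn: "open U" unfolding U_def by (rule Dom_open)
  have conv: "\<And>x y z. x \<in> U \<Longrightarrow> y \<in> U \<Longrightarrow> x \<le> z \<Longrightarrow> z \<le> y \<Longrightarrow> z \<in> U"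
    unfolding U_def by (rule Dom_conv)
  have st: "(S1 < S2 \<longrightarrow> g p > 0) \<and> (S2 < S1 \<longrightarrow> g p < 0)"
    if "p \<in> U" "\<And>z. z \<in> U \<Longrightarrow> g z = 0 \<Longrightarrow> p < z" for p
    using start that unfolding U_def by blast
  have gdiff: "gam s \<alpha> \<beta> cs \<tau> 1 - gam s \<alpha> \<beta> cs \<tau> 2 = int S1 - int S2"
    unfolding gam_diff S1_def S2_def ..
  have stA: "stoich \<alpha> \<beta> \<tau> 1 = a0 * A \<tau>" by (rule stoich_A[OF a0])
  have stI: "stoich \<alpha> \<beta> \<tau> 1 = real_of_int (int (\<beta> \<tau> 1) - int (\<alpha> \<tau> 1))" unfolding stoich_def by simp
  consider "a0 > 0" | "a0 < 0" using a0 by linarith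
  then show ?thesis
  proof cases
    case 1
    have "ZS \<subseteq> Dn"
    proof
      fix t assume t: "t \<in> ZS"
      have "gd s \<alpha> \<beta> \<kappa>s lam cs t < 0" using ZSprop(1)[OF t] 1 by (simp add: mult_less_0_iff)
      then have "down_cross g t" using deriv_down[OF g_der] ZSprop(2)[OF t] by blast
      then show "t \<in> Dn" unfolding Dn_def using ZSprop(2,3)[OF t] by simp
    qed
    then have "N + 1 \<le> card Dn" using card_mono[OF finDn] cZS by metis
    then have cU: "card Up \<le> N" using sumc by simp
    have "S1 < S2"
    proof (rule ccontr)
      assume "\<not> S1 < S2"
      then have S21: "S2 < S1" using S12 by simp
      have "card {z \<in> U. - g z = 0 \<and> up_cross (\<lambda>t. - g t) z} \<le> card {z \<in> U. - g z = 0 \<and> down_cross (\<lambda>t. - g t) z}"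
      proof (rule count_cross[OF cc opn conv])
        show "finite {z \<in> U. - g z = 0}" unfolding ZUn by (rule Z_fin)
      next
        fix p assume p: "p \<in> U" "\<And>z. z \<in> U \<Longrightarrow> - g z = 0 \<Longrightarrow> p < z"
        have "g p < 0" using st[OF p(1)] p(2) S21 by auto
        then show "- g p > 0" by simp
      qed
      then have "card Dn \<le> card Up" unfolding Dn_def Up_def down_up_neg by simp
      then show False using \<open>N + 1 \<le> card Dn\<close> cU by simp
    qed
    then have "gam s \<alpha> \<beta> cs \<tau> 1 - gam s \<alpha> \<beta> cs \<tau> 2 < 0" unfolding gdiff by simp
    moreover have "int (\<beta> \<tau> 1) - int (\<alpha> \<tau> 1) > 0"
    proof -
      have "stoich \<alpha> \<beta> \<tau> 1 > 0" unfolding stA using 1 Atau by simp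
      then show ?thesis unfolding stI by simp
    qed
    ultimately show ?thesis by (simp add: mult_neg_pos)
  next
    case 2
    have "ZS \<subseteq> Up"
    proof
      fix t assume t: "t \<in> ZS"
      have "gd s \<alpha> \<beta> \<kappa>s lam cs t > 0" using ZSprop(1)[OF t] 2 by (simp add: mult_less_0_iff)
      then have "up_cross g t" using deriv_up[OF g_der] ZSprop(2)[OF t] by blast
      then show "t \<in> Up" unfolding Up_def using ZSprop(2,3)[OF t] by simp
    qed
    then have "N + 1 \<le> card Up" using card_mono[OF finUp] cZS by metis
    then have cD: "card Dn \<le> N" using sumc by simp
    have "S2 < S1"
    proof (rule ccontr)
      assume "\<not> S2 < S1"
      then have S12': "S1 < S2" using S12 by simp
      have "card {z \<in> U. g z = 0 \<and> up_cross g z} \<le> card {z \<in> U. g z = 0 \<and> down_cross g z}"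
      proof (rule count_cross[OF g_cont opn conv])
        show "finite {z \<in> U. g z = 0}" unfolding ZU by (rule Z_fin)
      next
        fix p assume p: "p \<in> U" "\<And>z. z \<in> U \<Longrightarrow> g z = 0 \<Longrightarrow> p < z"
        show "g p > 0" using st[OF p(1)] p(2) S12' by auto
      qed
      then have "card Up \<le> card Dn" unfolding Dn_def Up_def by simp
      then show False using \<open>N + 1 \<le> card Up\<close> cD by simp
    qed
    then have "gam s \<alpha> \<beta> cs \<tau> 1 - gam s \<alpha> \<beta> cs \<tau> 2 > 0" unfolding gdiff by simp
    moreover have "int (\<beta> \<tau> 1) - int (\<alpha> \<tau> 1) < 0"
    proof -
      have "stoich \<alpha> \<beta> \<tau> 1 < 0" unfolding stA using 2 Atau by (simp add: mult_neg_pos)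
      then show ?thesis unfolding stI by simp
    qed
    ultimately show ?thesis by (simp add: mult_pos_neg)
  qed
qed

end

theorem lemma7p8:
  fixes s r N :: nat and \<alpha> \<beta> :: "nat \<Rightarrow> nat \<Rightarrow> nat" and \<kappa>s cs :: "nat \<Rightarrow> real"
  assumes G: "two_reaction_network s \<alpha> \<beta>"
    and lab1: "\<beta> 1 1 \<noteq> \<alpha> 1 1"
    and cap: "cap_pos s \<alpha> \<beta> = enat (2 * N + 1)"
    and kpos: "\<kappa>s 1 > 0" "\<kappa>s 2 > 0"
    and nss: "finite (pos_steady_states s \<alpha> \<beta> \<kappa>s cs)"
             "card (pos_steady_states s \<alpha> \<beta> \<kappa>s cs) = 2 * N + 1"
    and nstab: "card {x \<in> pos_steady_states s \<alpha> \<beta> \<kappa>s cs. stable s \<alpha> \<beta> \<kappa>s x} = N + 1"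
    and reps: "class_reps s \<alpha> \<beta> cs r"
    and lab2: "1 \<in> Hset s \<alpha> \<beta> cs r"
  shows "\<forall>\<tau>. is_tau s \<alpha> \<beta> cs r \<tau> \<longrightarrow>
           (gam s \<alpha> \<beta> cs \<tau> 1 - gam s \<alpha> \<beta> cs \<tau> 2) * (int (\<beta> \<tau> 1) - int (\<alpha> \<tau> 1)) < 0
         \<and> (sp_class s \<alpha> \<beta> cs \<tau> = {\<tau>} \<longrightarrow>
              (int (\<alpha> \<tau> 1) - int (\<alpha> \<tau> 2)) * (int (\<beta> \<tau> 1) - int (\<alpha> \<tau> 1)) < 0)"
proof (intro allI impI conjI)
  fix \<tau> assume tau: "is_tau s \<alpha> \<beta> cs r \<tau>"
  interpret I: L78 s r N \<alpha> \<beta> \<kappa>s cs \<tau>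
    by (unfold_locales) (use G lab1 cap kpos nss nstab reps lab2 tau in auto)
  show m: "(gam s \<alpha> \<beta> cs \<tau> 1 - gam s \<alpha> \<beta> cs \<tau> 2) * (int (\<beta> \<tau> 1) - int (\<alpha> \<tau> 1)) < 0"
    by (rule I.main_L)
  assume sp: "sp_class s \<alpha> \<beta> cs \<tau> = {\<tau>}"
  have "gam s \<alpha> \<beta> cs \<tau> 1 - gam s \<alpha> \<beta> cs \<tau> 2 = int (\<alpha> \<tau> 1) - int (\<alpha> \<tau> 2)"
    unfolding I.gam_diff I.Sm_def sp by simp
  then show "(int (\<alpha> \<tau> 1) - int (\<alpha> \<tau> 2)) * (int (\<beta> \<tau> 1) - int (\<alpha> \<tau> 1)) < 0"
    using m by simp
qed


end
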